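(* In the two-type population dependent branching process with parameters $p\in(0,1]$, $q\in[0,1]$, let $Z(t)=p\,n_B(t)-(1-p)\,n_A(t)$. Then $\{Z(t)\}_{t\ge0}$ is a martingale (with respect to the natural filtration) and $e^{-t}Z(t)\to 0$ almost surely. Consequently $e^{-t}n_B(t)\to(1-p)W/p$ almost surely, where $W$ is the almost sure limit of $e^{-t}n_A(t)$ as $t\to\infty$ (a strictly positive finite random variable).
   Context: Population dependent branching process: a continuous-time Markov process started at time $0$ with two individuals, one of type $A$ and one of type $B$; individuals live forever. Let $n_A(t), n_B(t)$ be the numbers of type $A$, $B$ individuals at time $t$ ($n_A(0)=n_B(0)=1$). At time $t$, each type $A$ individual gives birth to type $A$ individuals at rate $q$ and to type $B$ individuals at rate $(1-p)(1-q)/p$; each type $B$ individual gives birth to type $A$ individuals at rate $\frac{n_A(t)}{n_B(t)}(1-q)$ and to type $B$ individuals at rate $\frac{n_A(t)}{n_B(t)}\cdot\frac{q(1-p)}{p}$. *)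

theory Defs
  imports "HOL-Probability.Probability"
begin

text \<open>The process is realised by the standard
  jump-chain / holding-time construction of a continuous-time Markov chain from
  i.i.d. Exp(1) variables E k (holding times) and i.i.d. Uniform[0,1] variables U k
  (choice of the jump), all independent.\<close>

text \<open>Total rate at which a new type A individual is born in state s:
  each A gives birth to A at rate q, each B gives birth to A at rate (n_A/n_B)(1-q).\<close>
definition rate_A :: "real \<Rightarrow> real \<Rightarrow> nat \<times> nat \<Rightarrow> real" where
  "rate_A p q s = real (fst s) * q + real (snd s) * (real (fst s) / real (snd s) * (1 - q))"

text \<open>Total rate at which a new type B individual is born in state s:
  each A gives birth to B at rate (1-p)(1-q)/p, each B at rate (n_A/n_B) q (1-p)/p.\<close>
definition rate_B :: "real \<Rightarrow> real \<Rightarrow> nat \<times> nat \<Rightarrow> real" where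
  "rate_B p q s = real (fst s) * ((1 - p) * (1 - q) / p)
                 + real (snd s) * (real (fst s) / real (snd s) * (q * (1 - p) / p))"

definition total_rate :: "real \<Rightarrow> real \<Rightarrow> nat \<times> nat \<Rightarrow> real" where
  "total_rate p q s = rate_A p q s + rate_B p q s"

fun jump_chain :: "real \<Rightarrow> real \<Rightarrow> (nat \<Rightarrow> 'a \<Rightarrow> real) \<Rightarrow> 'a \<Rightarrow> nat \<Rightarrow> nat \<times> nat" where
  "jump_chain p q U \<omega> 0 = (1, 1)"
| "jump_chain p q U \<omega> (Suc k) =
     (let s = jump_chain p q U \<omega> k in
      if U k \<omega> < rate_A p q s / total_rate p q s then (fst s + 1, snd s) else (fst s, snd s + 1))"

definition jump_time :: "real \<Rightarrow> real \<Rightarrow> (nat \<Rightarrow> 'a \<Rightarrow> real) \<Rightarrow> (nat \<Rightarrow> 'a \<Rightarrow> real) \<Rightarrow> 'a \<Rightarrow> nat \<Rightarrow> real" where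
  "jump_time p q E U \<omega> k = (\<Sum>j<k. E j \<omega> / total_rate p q (jump_chain p q U \<omega> j))"

text \<open>The process (n_A(t), n_B(t)); after a (probability zero) explosion it is set to (0,0).\<close>
definition pdbp :: "real \<Rightarrow> real \<Rightarrow> (nat \<Rightarrow> 'a \<Rightarrow> real) \<Rightarrow> (nat \<Rightarrow> 'a \<Rightarrow> real) \<Rightarrow> real \<Rightarrow> 'a \<Rightarrow> nat \<times> nat" where
  "pdbp p q E U t \<omega> =
     (if \<exists>k. t < jump_time p q E U \<omega> (Suc k)
      then jump_chain p q U \<omega> (LEAST k. t < jump_time p q E U \<omega> (Suc k))
      else (0, 0))"

definition nA :: "real \<Rightarrow> real \<Rightarrow> (nat \<Rightarrow> 'a \<Rightarrow> real) \<Rightarrow> (nat \<Rightarrow> 'a \<Rightarrow> real) \<Rightarrow> real \<Rightarrow> 'a \<Rightarrow> nat" where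
  "nA p q E U t \<omega> = fst (pdbp p q E U t \<omega>)"

definition nB :: "real \<Rightarrow> real \<Rightarrow> (nat \<Rightarrow> 'a \<Rightarrow> real) \<Rightarrow> (nat \<Rightarrow> 'a \<Rightarrow> real) \<Rightarrow> real \<Rightarrow> 'a \<Rightarrow> nat" where
  "nB p q E U t \<omega> = snd (pdbp p q E U t \<omega>)"

definition natural_filtration :: "'a measure \<Rightarrow> (real \<Rightarrow> 'a \<Rightarrow> 'b) \<Rightarrow> real \<Rightarrow> 'a measure" where
  "natural_filtration M X t =
     sigma (space M) {X r -` A \<inter> space M | r A. 0 \<le> r \<and> r \<le> t}"

definition ct_martingale :: "'a measure \<Rightarrow> (real \<Rightarrow> 'a measure) \<Rightarrow> (real \<Rightarrow> 'a \<Rightarrow> real) \<Rightarrow> bool" where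
  "ct_martingale M F Z \<longleftrightarrow>
     (\<forall>t\<ge>0. subalgebra M (F t) \<and> integrable M (Z t) \<and> Z t \<in> borel_measurable (F t)) \<and>
     (\<forall>s t. 0 \<le> s \<and> s \<le> t \<longrightarrow> sets (F s) \<subseteq> sets (F t)) \<and>
     (\<forall>s t. 0 \<le> s \<and> s \<le> t \<longrightarrow> (AE \<omega> in M. real_cond_exp M (F s) (Z t) \<omega> = Z s \<omega>))"

end

theory Submission
  imports Defs "HOL-Real_Asymp.Real_Asymp"
begin


type_synonym path = "nat + nat \<Rightarrow> real"

definition cnt :: "real \<Rightarrow> path \<Rightarrow> nat \<Rightarrow> nat" where
  "cnt p x k = (\<Sum>j<k. if x (Inr j) < p then 1 else 0)"
definition aa :: "real \<Rightarrow> path \<Rightarrow> nat \<Rightarrow> real" where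
  "aa p x k = real (Suc (cnt p x k))"
definition TT :: "real \<Rightarrow> path \<Rightarrow> nat \<Rightarrow> real" where
  "TT p x k = (\<Sum>j<k. p * x (Inl j) / aa p x j)"
definition JC :: "real \<Rightarrow> path \<Rightarrow> nat \<Rightarrow> nat \<times> nat" where
  "JC p x k = (Suc (cnt p x k), Suc k - cnt p x k)"
definition NN :: "real \<Rightarrow> real \<Rightarrow> path \<Rightarrow> nat" where
  "NN p t x = (LEAST k. t < TT p x (Suc k))"
definition PP :: "real \<Rightarrow> real \<Rightarrow> path \<Rightarrow> nat \<times> nat" where
  "PP p t x = (if \<exists>k. t < TT p x (Suc k) then JC p x (NN p t x) else (0,0))"
definition Vp :: "(nat \<Rightarrow> 'a \<Rightarrow> real) \<Rightarrow> (nat \<Rightarrow> 'a \<Rightarrow> real) \<Rightarrow> 'a \<Rightarrow> path" where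
  "Vp E U \<omega> = (\<lambda>i. case i of Inl k \<Rightarrow> E k \<omega> | Inr k \<Rightarrow> U k \<omega>)"
definition ZZ :: "real \<Rightarrow> real \<Rightarrow> path \<Rightarrow> real" where
  "ZZ p t x = p * real (snd (PP p t x)) - (1 - p) * real (fst (PP p t x))"
definition Zc :: "real \<Rightarrow> path \<Rightarrow> nat \<Rightarrow> real" where
  "Zc p x k = p * (real k + 2) - aa p x k"
definition Dd :: "real \<Rightarrow> path \<Rightarrow> nat \<Rightarrow> real" where
  "Dd p x k = p - (if x (Inr k) < p then 1 else 0)"

lemma cnt_0[simp]: "cnt p x 0 = 0" by (simp add: cnt_def)
lemma cnt_Suc: "cnt p x (Suc k) = cnt p x k + (if x (Inr k) < p then 1 else 0)"
  by (simp add: cnt_def)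
lemma cnt_le: "cnt p x k \<le> k"
  by (induction k) (auto simp: cnt_Suc)
lemma aa_ge1: "1 \<le> aa p x k" by (simp add: aa_def)
lemma aa_pos: "0 < aa p x k" by (simp add: aa_def)
lemma aa_le: "aa p x k \<le> real k + 1" using cnt_le[of p x k] by (simp add: aa_def)
lemma aa_Suc: "aa p x (Suc k) = aa p x k + (if x (Inr k) < p then 1 else 0)"
  by (simp add: aa_def cnt_Suc)
lemma TT_0[simp]: "TT p x 0 = 0" by (simp add: TT_def)
lemma TT_Suc: "TT p x (Suc k) = TT p x k + p * x (Inl k) / aa p x k"
  by (simp add: TT_def)

lemma rates:
  assumes "0 < p" "1 \<le> a" "1 \<le> b"
  shows "total_rate p q (a, b) = real a / p" "rate_A p q (a,b) / total_rate p q (a,b) = p"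
proof -
  have ra: "rate_A p q (a,b) = real a"
    using assms by (simp add: rate_A_def field_simps)
  have rb: "rate_B p q (a,b) = real a * (1 - p) / p"
    using assms by (simp add: rate_B_def field_simps)
  show t: "total_rate p q (a, b) = real a / p"
    using assms by (simp add: total_rate_def ra rb field_simps)
  show "rate_A p q (a,b) / total_rate p q (a,b) = p"
    using assms by (simp add: t ra)
qed

lemma jump_chain_eq:
  assumes "0 < p"
  shows "jump_chain p q U \<omega> k = JC p (Vp E U \<omega>) k"
proof (induction k)
  case 0 then show ?case by (simp add: JC_def)
next
  case (Suc k)
  have c: "cnt p (Vp E U \<omega>) k \<le> k" by (rule cnt_le)
  have r: "rate_A p q (JC p (Vp E U \<omega>) k) / total_rate p q (JC p (Vp E U \<omega>) k) = p"
    unfolding JC_def using rates(2)[OF assms, of "Suc (cnt p (Vp E U \<omega>) k)" "Suc k - cnt p (Vp E U \<omega>) k" q] c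
    by simp
  have v: "Vp E U \<omega> (Inr k) = U k \<omega>" by (simp add: Vp_def)
  show ?case
    using c r unfolding jump_chain.simps Suc Let_def
    by (simp add: JC_def cnt_Suc v Suc_diff_le)
qed

lemma jump_time_eq:
  assumes "0 < p"
  shows "jump_time p q E U \<omega> k = TT p (Vp E U \<omega>) k"
proof -
  have "total_rate p q (jump_chain p q U \<omega> j) = aa p (Vp E U \<omega>) j / p" for j
    unfolding jump_chain_eq[OF assms, where E=E] JC_def aa_def
    using rates(1)[OF assms, of "Suc (cnt p (Vp E U \<omega>) j)" "Suc j - cnt p (Vp E U \<omega>) j" q] cnt_le[of p "Vp E U \<omega>" j]
    by simp
  then show ?thesis
    unfolding jump_time_def TT_def using assms aa_pos[of p "Vp E U \<omega>"]
    by (intro sum.cong) (auto simp: Vp_def)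
qed

lemma pdbp_eq:
  assumes "0 < p"
  shows "pdbp p q E U t \<omega> = PP p t (Vp E U \<omega>)"
  unfolding pdbp_def PP_def NN_def jump_time_eq[OF assms] jump_chain_eq[OF assms, where E=E] by simp

lemma nA_eq: "0 < p \<Longrightarrow> nA p q E U t \<omega> = fst (PP p t (Vp E U \<omega>))"
  by (simp add: nA_def pdbp_eq)
lemma nB_eq: "0 < p \<Longrightarrow> nB p q E U t \<omega> = snd (PP p t (Vp E U \<omega>))"
  by (simp add: nB_def pdbp_eq)

lemma JC_Z: "p * real (snd (JC p x k)) - (1 - p) * real (fst (JC p x k)) = Zc p x k"
  using cnt_le[of p x k] by (simp add: JC_def Zc_def aa_def of_nat_diff algebra_simps)

lemma ZZ_eq: "ZZ p t x = (if \<exists>k. t < TT p x (Suc k) then Zc p x (NN p t x) else 0)"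
  by (simp add: ZZ_def PP_def JC_Z)

lemma Zc_Suc: "Zc p x (Suc k) - Zc p x k = Dd p x k"
  by (simp add: Zc_def Dd_def aa_Suc algebra_simps)

lemma abs_Zc: "0 < p \<Longrightarrow> p \<le> 1 \<Longrightarrow> \<bar>Zc p x k\<bar> \<le> real k + 2"
proof -
  assume "0 < p" "p \<le> 1"
  then have a: "p * (real k + 2) \<le> real k + 2" "0 \<le> p * (real k + 2)"
    by (auto intro: mult_left_le_one_le)
  show ?thesis using a aa_ge1[of p x k] aa_le[of p x k]
    unfolding Zc_def abs_le_iff by linarith
qed

lemma abs_Dd: "0 < p \<Longrightarrow> p \<le> 1 \<Longrightarrow> \<bar>Dd p x k\<bar> \<le> 1"
  by (simp add: Dd_def)


lemma abel_identity:
  fixes Y c :: "nat \<Rightarrow> real"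
  shows "(\<Sum>k<n. Y k * c k) = (\<Sum>k<n. Y k) * c n - (\<Sum>k<n. (\<Sum>j<Suc k. Y j) * (c (Suc k) - c k))"
  by (induction n) (simp_all add: algebra_simps)

lemma abel_conv:
  fixes Y c :: "nat \<Rightarrow> real"
  assumes "(\<lambda>n. (\<Sum>k<n. Y k) * c n) \<longlonglongrightarrow> 0"
    and "summable (\<lambda>k. \<bar>(\<Sum>j<Suc k. Y j) * (c (Suc k) - c k)\<bar>)"
  shows "convergent (\<lambda>n. \<Sum>k<n. Y k * c k)"
proof -
  have "convergent (\<lambda>n. \<Sum>k<n. (\<Sum>j<Suc k. Y j) * (c (Suc k) - c k))"
    using summable_rabs_cancel[OF assms(2)] summable_iff_convergent by blast
  moreover have "convergent (\<lambda>n. (\<Sum>k<n. Y k) * c n)"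
    using assms(1) convergentI by blast
  ultimately have "convergent (\<lambda>n. (\<Sum>k<n. Y k) * c n - (\<Sum>k<n. (\<Sum>j<Suc k. Y j) * (c (Suc k) - c k)))"
    by (intro convergent_diff)
  then show ?thesis by (subst abel_identity[of Y c])
qed

lemma summable_powr_54: "summable (\<lambda>k::nat. (real k + 1) powr (3/4) / (real k)^2)"
proof (rule summable_comparison_test_bigo)
  show "summable (\<lambda>n. norm (real n powr (-5/4)))"
    using summable_real_powr_iff[of "-5/4"] by simp
  show "(\<lambda>k::nat. (real k + 1) powr (3/4) / (real k)^2) \<in> O(\<lambda>k. real k powr (-5/4))"
    by real_asymp
qed

lemma summable_inv_sq: "summable (\<lambda>k::nat. 1 / (real k)^2)"
proof (rule summable_comparison_test[OF _ summable_powr_54])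
  show "\<exists>N. \<forall>n\<ge>N. norm (1 / (real n)^2) \<le> (real n + 1) powr (3/4) / (real n)^2"
  proof (intro exI allI impI)
    fix n :: nat
    have "1 \<le> (real n + 1) powr (3/4)" by (intro ge_one_powr_ge_zero) auto
    then show "norm (1 / (real n)^2) \<le> (real n + 1) powr (3/4) / (real n)^2"
      by (simp add: divide_right_mono)
  qed
qed

locale wseq =
  fixes a :: "nat \<Rightarrow> real" and p :: real
  assumes p: "0 < p"
    and a1: "\<And>k. 1 \<le> a k" and amono: "\<And>k. a k \<le> a (Suc k)" and astep: "\<And>k. a (Suc k) \<le> a k + 1"
    and alow: "eventually (\<lambda>k. p/2 * real k \<le> a k) sequentially"
begin

lemma apos: "0 < a k" using a1[of k] by simp

lemma inv_sq_bound: "eventually (\<lambda>k. 1 / (a k)^2 \<le> (4 / p^2) * (1 / (real k)^2)) sequentially"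
  using alow eventually_gt_at_top[of 0]
proof eventually_elim
  case (elim k)
  have "0 < p/2 * real k" using p elim(2) by simp
  then have "(p/2 * real k)^2 \<le> (a k)^2" using elim(1) by (intro power_mono) auto
  then have "1 / (a k)^2 \<le> 1 / (p/2 * real k)^2"
    using \<open>0 < p/2 * real k\<close> apos[of k] elim(2) by (intro divide_left_mono mult_pos_pos) auto
  also have "\<dots> = (4 / p^2) * (1 / (real k)^2)" by (simp add: power2_eq_square field_simps)
  finally show ?case .
qed

lemma summable_inv_a_sq: "summable (\<lambda>k. 1 / (a k)^2)"
proof (rule summable_comparison_test_ev)
  show "eventually (\<lambda>k. norm (1 / (a k)^2) \<le> (4 / p^2) * (1 / (real k)^2)) sequentially"
    using inv_sq_bound by eventually_elim simp
  show "summable (\<lambda>k. (4 / p^2) * (1 / (real k)^2))"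
    by (intro summable_mult summable_inv_sq)
qed

lemma a_tendsto: "filterlim a at_top sequentially"
proof (rule filterlim_at_top_mono[OF _ alow])
  show "filterlim (\<lambda>k. p/2 * real k) at_top sequentially"
    using p by (intro filterlim_tendsto_pos_mult_at_top[OF tendsto_const] filterlim_real_sequentially) auto
qed

lemma conv_weighted:
  fixes Y :: "nat \<Rightarrow> real"
  assumes S: "eventually (\<lambda>k. \<bar>\<Sum>j<k. Y j\<bar> \<le> real k powr (3/4)) sequentially"
  shows "convergent (\<lambda>n. \<Sum>k<n. Y k * (1 / a k))"
proof (rule abel_conv)
  show "(\<lambda>n. (\<Sum>k<n. Y k) * (1 / a n)) \<longlonglongrightarrow> 0"
  proof (rule Lim_null_comparison)
    show "eventually (\<lambda>n. norm ((\<Sum>k<n. Y k) * (1 / a n)) \<le> (2/p) * (real n powr (3/4) / real n)) sequentially"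
      using alow S eventually_gt_at_top[of 0]
    proof eventually_elim
      case (elim n)
      have pn: "0 < p/2 * real n" using p elim(3) by simp
      have "norm ((\<Sum>k<n. Y k) * (1 / a n)) = \<bar>\<Sum>k<n. Y k\<bar> / a n"
        using apos[of n] by simp
      also have "\<dots> \<le> real n powr (3/4) / a n"
        using elim(2) apos[of n] by (intro divide_right_mono) auto
      also have "\<dots> \<le> real n powr (3/4) / (p/2 * real n)"
        using elim(1) pn by (intro divide_left_mono) auto
      also have "\<dots> = (2/p) * (real n powr (3/4) / real n)" using p by (simp add: field_simps)
      finally show ?case .
    qed
    have "(\<lambda>n::nat. real n powr (3/4) / real n) \<longlonglongrightarrow> 0" by real_asymp
    then show "(\<lambda>n. (2/p) * (real n powr (3/4) / real n)) \<longlonglongrightarrow> 0"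
      by (intro tendsto_mult_right_zero)
  qed
  show "summable (\<lambda>k. \<bar>(\<Sum>j<Suc k. Y j) * (1 / a (Suc k) - 1 / a k)\<bar>)"
  proof (rule summable_comparison_test_ev)
    have "eventually (\<lambda>k. \<bar>\<Sum>j<Suc k. Y j\<bar> \<le> real (Suc k) powr (3/4)) sequentially"
      using S by (subst eventually_sequentially_Suc)
    then show "eventually (\<lambda>k. norm \<bar>(\<Sum>j<Suc k. Y j) * (1 / a (Suc k) - 1 / a k)\<bar>
           \<le> (4 / p^2) * ((real k + 1) powr (3/4) / (real k)^2)) sequentially"
      using inv_sq_bound
    proof eventually_elim
      case (elim k)
      have d: "\<bar>1 / a (Suc k) - 1 / a k\<bar> \<le> 1 / (a k)^2"
      proof -
        have "\<bar>1 / a (Suc k) - 1 / a k\<bar> = (a (Suc k) - a k) / (a k * a (Suc k))"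
          using apos[of k] apos[of "Suc k"] amono[of k] by (simp add: field_simps abs_if)
        also have "\<dots> \<le> 1 / (a k * a (Suc k))"
          using apos[of k] apos[of "Suc k"] astep[of k] by (intro divide_right_mono) auto
        also have "\<dots> \<le> 1 / (a k * a k)"
          using apos[of k] amono[of k] by (intro divide_left_mono mult_left_mono) auto
        finally show ?thesis by (simp add: power2_eq_square)
      qed
      have "norm \<bar>(\<Sum>j<Suc k. Y j) * (1 / a (Suc k) - 1 / a k)\<bar>
            = \<bar>\<Sum>j<Suc k. Y j\<bar> * \<bar>1 / a (Suc k) - 1 / a k\<bar>" by (simp add: abs_mult)
      also have "\<dots> \<le> (real k + 1) powr (3/4) * (1 / (a k)^2)"
        using elim(1) d by (intro mult_mono) (auto simp: add.commute)
      also have "\<dots> \<le> (real k + 1) powr (3/4) * ((4 / p^2) * (1 / (real k)^2))"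
        using elim(2) by (intro mult_left_mono) auto
      finally show ?case by (simp add: mult_ac)
    qed
    show "summable (\<lambda>k. (4 / p^2) * ((real k + 1) powr (3/4) / (real k)^2))"
      by (intro summable_mult summable_powr_54)
  qed
qed

lemma conv_ln:
  "convergent (\<lambda>n. \<Sum>k<n. ln (a (Suc k)) - ln (a k) - (a (Suc k) - a k) / a k)"
proof -
  have ev2: "eventually (\<lambda>k. 2 \<le> a k) sequentially"
    using a_tendsto by (simp add: filterlim_at_top)
  have "summable (\<lambda>k. ln (a (Suc k)) - ln (a k) - (a (Suc k) - a k) / a k)"
  proof (rule summable_comparison_test_ev)
    show "eventually (\<lambda>k. norm (ln (a (Suc k)) - ln (a k) - (a (Suc k) - a k) / a k) \<le> 2 * (1 / (a k)^2)) sequentially"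
      using ev2
    proof eventually_elim
      case (elim k)
      define y where "y = (a (Suc k) - a k) / a k"
      have y0: "0 \<le> y" unfolding y_def using apos[of k] amono[of k] by simp
      have y1: "y \<le> 1 / a k" unfolding y_def using apos[of k] astep[of k]
        by (intro divide_right_mono) auto
      have "1 / a k \<le> 1 / 2" using elim by (intro divide_left_mono) auto
      then have y: "\<bar>y\<bar> \<le> 1/2" "0 \<le> y" "y \<le> 1 / a k" using y0 y1 by auto
      have "1 + y = a (Suc k) / a k" using apos[of k] by (simp add: y_def field_simps)
      then have "ln (a (Suc k)) - ln (a k) = ln (1 + y)"
        using apos[of k] apos[of "Suc k"] by (simp add: ln_div)
      then have "norm (ln (a (Suc k)) - ln (a k) - (a (Suc k) - a k) / a k) = \<bar>ln (1 + y) - y\<bar>"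
        by (simp add: y_def)
      also have "\<dots> \<le> 2 * y^2" by (rule abs_ln_one_plus_x_minus_x_bound) (use y in auto)
      also have "\<dots> \<le> 2 * (1 / a k)^2" using y by (intro mult_left_mono power_mono) auto
      finally show ?case by (simp add: power_divide)
    qed
    show "summable (\<lambda>k. 2 * (1 / (a k)^2))" by (intro summable_mult summable_inv_a_sq)
  qed
  then show ?thesis by (simp add: summable_iff_convergent)
qed

end


lemma aa_real: "aa p x k = 1 + (\<Sum>j<k. if x (Inr j) < p then 1 else 0)"
  unfolding aa_def by (induction k) (auto simp: cnt_Suc)

lemma TT_mono:
  assumes "0 \<le> p" "\<And>j. 0 \<le> x (Inl j)" "m \<le> n"
  shows "TT p x m \<le> TT p x n"
proof -
  have "TT p x k \<le> TT p x (Suc k)" for k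
    using assms aa_pos[of p x k] by (simp add: TT_Suc)
  then show ?thesis using assms(3) by (rule lift_Suc_mono_le)
qed

lemma NN_props:
  assumes "\<exists>k. t < TT p x (Suc k)"
  shows "t < TT p x (Suc (NN p t x))" "\<And>k. k < NN p t x \<Longrightarrow> \<not> t < TT p x (Suc k)"
    "0 \<le> t \<Longrightarrow> TT p x (NN p t x) \<le> t"
proof -
  show "t < TT p x (Suc (NN p t x))" unfolding NN_def using assms by (rule LeastI_ex)
  show "\<And>k. k < NN p t x \<Longrightarrow> \<not> t < TT p x (Suc k)" unfolding NN_def by (rule not_less_Least)
  assume t: "0 \<le> t"
  show "TT p x (NN p t x) \<le> t"
  proof (cases "NN p t x")
    case 0 then show ?thesis using t by simp
  next
    case (Suc m)
    then have "\<not> t < TT p x (Suc m)" unfolding NN_def by (intro not_less_Least) simp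
    then show ?thesis using Suc by simp
  qed
qed

theorem det_main:
  fixes x :: path and p :: real
  assumes p: "0 < p" "p \<le> 1"
    and hE: "\<And>j. 0 \<le> x (Inl j)"
    and hX: "eventually (\<lambda>k. \<bar>\<Sum>j<k. ((if x (Inr j) < p then 1 else 0) - p)\<bar> \<le> real k powr (3/4)) sequentially"
    and hE2: "eventually (\<lambda>k. \<bar>\<Sum>j<k. (x (Inl j) - 1)\<bar> \<le> real k powr (3/4)) sequentially"
  defines "Lw \<equiv> lim (\<lambda>k. ln (aa p x k) - TT p x k)"
  shows "\<forall>t. \<exists>k. t < TT p x (Suc k)"
    and "((\<lambda>t. exp (-t) * real (fst (PP p t x))) \<longlongrightarrow> exp Lw) at_top"
    and "((\<lambda>t. exp (-t) * ZZ p t x) \<longlongrightarrow> 0) at_top"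
    and "((\<lambda>t. exp (-t) * real (snd (PP p t x))) \<longlongrightarrow> (1 - p) * exp Lw / p) at_top"
proof -
  define a where "a = aa p x"
  define X where "X = (\<lambda>j. if x (Inr j) < p then 1 else (0::real))"
  define L where "L = (\<lambda>k. ln (a k) - TT p x k)"
  have aX: "a k = 1 + p * real k + (\<Sum>j<k. (X j - p))" for k
    by (simp add: a_def aa_real X_def sum_subtractf)
  have aS: "a (Suc k) = a k + X k" for k by (simp add: a_def X_def aa_Suc)
  have alow: "eventually (\<lambda>k. p/2 * real k \<le> a k) sequentially"
  proof -
    have "eventually (\<lambda>k::nat. real k powr (3/4) \<le> p / 2 * real k) sequentially"
      using p(1) by real_asymp
    then show ?thesis using hX
    proof eventually_elim
      case (elim k)
      then have "- (real k powr (3/4)) \<le> (\<Sum>j<k. (X j - p))" by (simp add: X_def abs_le_iff)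
      then show ?case using elim(1) aX[of k] by simp
    qed
  qed
  note p1 = p(2)
  interpret wseq a p
  proof
    show "0 < p" by (fact p(1))
    show "1 \<le> a k" for k by (simp add: a_def aa_ge1)
    show "a k \<le> a (Suc k)" for k by (simp add: aS X_def)
    show "a (Suc k) \<le> a k + 1" for k by (simp add: aS X_def)
  qed (fact alow)
  have c1: "convergent (\<lambda>n. \<Sum>k<n. ln (a (Suc k)) - ln (a k) - (a (Suc k) - a k) / a k)"
    by (rule conv_ln)
  have c2: "convergent (\<lambda>n. \<Sum>k<n. (X k - p) * (1 / a k))"
    by (rule conv_weighted) (use hX in \<open>simp add: X_def\<close>)
  have c3: "convergent (\<lambda>n. \<Sum>k<n. (1 - x (Inl k)) * (1 / a k))"
  proof (rule conv_weighted)
    show "eventually (\<lambda>k. \<bar>\<Sum>j<k. (1 - x (Inl j))\<bar> \<le> real k powr (3/4)) sequentially"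
      using hE2
    proof eventually_elim
      case (elim k)
      have "(\<Sum>j<k. (1 - x (Inl j))) = - (\<Sum>j<k. (x (Inl j) - 1))" by (simp add: sum_negf[symmetric])
      then show ?case using elim by simp
    qed
  qed
  have c3': "convergent (\<lambda>n. p * (\<Sum>k<n. (1 - x (Inl k)) * (1 / a k)))"
    by (intro convergent_mult convergent_const c3)
  have stepL: "L (Suc k) - L k = (ln (a (Suc k)) - ln (a k) - (a (Suc k) - a k) / a k)
       + (X k - p) * (1 / a k) + p * ((1 - x (Inl k)) * (1 / a k))" for k
    using apos[of k] by (simp add: L_def a_def TT_Suc aS[unfolded a_def] field_simps)
  have L0: "L 0 = 0" by (simp add: L_def a_def aa_def)
  have Lsum: "L n = (\<Sum>k<n. ln (a (Suc k)) - ln (a k) - (a (Suc k) - a k) / a k)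
       + (\<Sum>k<n. (X k - p) * (1 / a k)) + p * (\<Sum>k<n. (1 - x (Inl k)) * (1 / a k))" for n
  proof -
    have "L n = (\<Sum>k<n. L (Suc k) - L k) + L 0" by (simp add: sum_lessThan_telescope)
    also have "\<dots> = (\<Sum>k<n. (ln (a (Suc k)) - ln (a k) - (a (Suc k) - a k) / a k)
       + (X k - p) * (1 / a k) + p * ((1 - x (Inl k)) * (1 / a k)))"
      by (simp add: stepL L0)
    finally show ?thesis by (simp add: sum.distrib sum_distrib_left)
  qed
  have convL: "convergent L"
    unfolding Lsum[abs_def] by (intro convergent_add c1 c2 c3')
  have Llim: "L \<longlonglongrightarrow> Lw"
  proof -
    have "Lw = lim L" by (simp add: Lw_def L_def a_def)
    then show ?thesis using convL by (simp add: convergent_LIMSEQ_iff)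
  qed
  have lna: "filterlim (\<lambda>k. ln (a k)) at_top sequentially"
    by (rule filterlim_compose[OF ln_at_top a_tendsto])
  have TTeq: "TT p x k = - L k + ln (a k)" for k by (simp add: L_def)
  have TTlim: "filterlim (TT p x) at_top sequentially"
    unfolding TTeq by (rule filterlim_tendsto_add_at_top[OF tendsto_minus[OF Llim] lna])
  show ex: "\<forall>t. \<exists>k. t < TT p x (Suc k)"
  proof
    fix t
    have "eventually (\<lambda>k. t + 1 \<le> TT p x k) sequentially"
      using TTlim by (simp add: filterlim_at_top)
    then obtain N where "\<And>n. n \<ge> N \<Longrightarrow> t + 1 \<le> TT p x n" by (auto simp: eventually_sequentially)
    then have "t < TT p x (Suc N)" by (metis le_SucI order_refl less_add_one order_less_le_trans)
    then show "\<exists>k. t < TT p x (Suc k)" by blast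
  qed
  define N where "N = (\<lambda>t. NN p t x)"
  have N1: "t < TT p x (Suc (N t))" for t using NN_props(1)[of t p x] ex by (simp add: N_def)
  have N2: "0 \<le> t \<Longrightarrow> TT p x (N t) \<le> t" for t using NN_props(3)[of t p x] ex by (simp add: N_def)
  have Nlim: "filterlim N at_top at_top"
    unfolding filterlim_at_top
  proof
    fix Z :: nat
    show "eventually (\<lambda>t. Z \<le> N t) at_top"
      using eventually_ge_at_top[of "TT p x Z"]
    proof eventually_elim
      case (elim t)
      show ?case
      proof (rule ccontr)
        assume "\<not> Z \<le> N t"
        then have "Suc (N t) \<le> Z" by simp
        then have "TT p x (Suc (N t)) \<le> TT p x Z" using p hE by (intro TT_mono) auto
        then show False using N1[of t] elim by simp
      qed
    qed
  qed
  have lndiff: "(\<lambda>k. ln (a (Suc k)) - ln (a k)) \<longlonglongrightarrow> 0"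
  proof (rule Lim_null_comparison)
    show "eventually (\<lambda>k. norm (ln (a (Suc k)) - ln (a k)) \<le> inverse (a k)) sequentially"
    proof (intro always_eventually allI)
      fix k
      have "ln (a (Suc k)) - ln (a k) = ln (a (Suc k) / a k)"
        using apos[of k] apos[of "Suc k"] by (simp add: ln_div)
      also have "\<dots> \<le> a (Suc k) / a k - 1"
        using apos[of k] apos[of "Suc k"] by (intro ln_le_minus_one) simp
      also have "\<dots> = X k / a k" using apos[of k] by (simp add: aS field_simps)
      also have "\<dots> \<le> inverse (a k)" using apos[of k] by (simp add: X_def field_simps)
      finally have u: "ln (a (Suc k)) - ln (a k) \<le> inverse (a k)" .
      have "0 \<le> ln (a (Suc k)) - ln (a k)" using apos[of k] amono[of k] by simp
      then show "norm (ln (a (Suc k)) - ln (a k)) \<le> inverse (a k)" using u by simp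
    qed
    show "(\<lambda>k. inverse (a k)) \<longlonglongrightarrow> 0" by (rule tendsto_inverse_0_at_top[OF a_tendsto])
  qed
  define v where "v = (\<lambda>k. L (Suc k) - (ln (a (Suc k)) - ln (a k)))"
  have vlim: "v \<longlonglongrightarrow> Lw"
    unfolding v_def using tendsto_diff[OF LIMSEQ_Suc[OF Llim] lndiff] by simp
  define f where "f = (\<lambda>t. ln (a (N t)) - t)"
  have flim: "(f \<longlongrightarrow> Lw) at_top"
  proof (rule tendsto_sandwich)
    show "eventually (\<lambda>t. v (N t) \<le> f t) at_top"
      by (intro always_eventually allI) (use less_imp_le[OF N1] in \<open>simp add: v_def f_def L_def\<close>)
    show "eventually (\<lambda>t. f t \<le> L (N t)) at_top"
      using eventually_ge_at_top[of "0::real"]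
      by eventually_elim (use N2 in \<open>simp add: f_def L_def\<close>)
    show "((\<lambda>t. v (N t)) \<longlongrightarrow> Lw) at_top" by (rule filterlim_compose[OF vlim Nlim])
    show "((\<lambda>t. L (N t)) \<longlongrightarrow> Lw) at_top" by (rule filterlim_compose[OF Llim Nlim])
  qed
  have fstPP: "real (fst (PP p t x)) = a (N t)" for t
    using ex by (simp add: PP_def JC_def a_def aa_def N_def)
  have e1: "exp (-t) * real (fst (PP p t x)) = exp (f t)" for t
    using apos[of "N t"] by (simp add: fstPP f_def exp_diff exp_minus field_simps)
  show W: "((\<lambda>t. exp (-t) * real (fst (PP p t x))) \<longlongrightarrow> exp Lw) at_top"
    unfolding e1 by (intro tendsto_exp flim)
  have Zca: "(\<lambda>k. Zc p x k / a k) \<longlonglongrightarrow> 0"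
  proof (rule Lim_null_comparison)
    show "eventually (\<lambda>k. norm (Zc p x k / a k) \<le> (2/p) * ((1 + real k powr (3/4)) / real k)) sequentially"
      using alow hX eventually_gt_at_top[of 0]
    proof eventually_elim
      case (elim k)
      have ze: "Zc p x k = 2 * p - 1 - (\<Sum>j<k. (X j - p))"
        using aX[of k] by (simp add: Zc_def a_def algebra_simps)
      have "\<bar>\<Sum>j<k. (X j - p)\<bar> \<le> real k powr (3/4)" using elim(2) by (simp add: X_def)
      then have "\<bar>Zc p x k\<bar> \<le> 1 + real k powr (3/4)"
        unfolding ze abs_le_iff using p1 p by linarith
      have pk: "0 < p/2 * real k" using p elim(3) by simp
      have "norm (Zc p x k / a k) = \<bar>Zc p x k\<bar> / a k" using apos[of k] by simp
      also have "\<dots> \<le> (1 + real k powr (3/4)) / a k"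
        using \<open>\<bar>Zc p x k\<bar> \<le> _\<close> apos[of k] by (intro divide_right_mono) auto
      also have "\<dots> \<le> (1 + real k powr (3/4)) / (p/2 * real k)"
        using elim(1) pk by (intro divide_left_mono) (auto intro: add_nonneg_nonneg)
      also have "\<dots> = (2/p) * ((1 + real k powr (3/4)) / real k)" using p by (simp add: field_simps)
      finally show ?case .
    qed
    have "(\<lambda>k::nat. (1 + real k powr (3/4)) / real k) \<longlonglongrightarrow> 0" by real_asymp
    then show "(\<lambda>k. (2/p) * ((1 + real k powr (3/4)) / real k)) \<longlonglongrightarrow> 0"
      by (intro tendsto_mult_right_zero)
  qed
  have ZZe: "exp (-t) * ZZ p t x = (exp (-t) * real (fst (PP p t x))) * (Zc p x (N t) / a (N t))" for t
    using ex apos[of "N t"] by (simp add: ZZ_eq fstPP N_def)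
  show Z: "((\<lambda>t. exp (-t) * ZZ p t x) \<longlongrightarrow> 0) at_top"
    unfolding ZZe using tendsto_mult[OF W filterlim_compose[OF Zca Nlim]] by simp
  have snde: "exp (-t) * real (snd (PP p t x)) = (exp (-t) * ZZ p t x + (1 - p) * (exp (-t) * real (fst (PP p t x)))) / p" for t
    using p by (simp add: ZZ_def field_simps)
  show "((\<lambda>t. exp (-t) * real (snd (PP p t x))) \<longlongrightarrow> (1 - p) * exp Lw / p) at_top"
    unfolding snde using tendsto_divide[OF tendsto_add[OF Z tendsto_mult[OF tendsto_const W]] tendsto_const, of p] p
    by simp
qed


locale pctx = prob_space M for M :: "'a measure" +
  fixes p :: real and E U :: "nat \<Rightarrow> 'a \<Rightarrow> real"
  assumes p0: "0 < p" and p1: "p \<le> 1"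
    and Ed: "\<And>k. distributed M lborel (E k) (exponential_density 1)"
    and Ud: "\<And>k. distributed M lborel (U k) (\<lambda>x. indicator {0..1::real} x / measure lborel {0..1::real})"
    and ind: "indep_vars (\<lambda>_. borel) (\<lambda>i. case i of Inl k \<Rightarrow> E k | Inr k \<Rightarrow> U k) (UNIV :: (nat + nat) set)"
begin

abbreviation "V \<equiv> (\<lambda>i. case i of Inl k \<Rightarrow> E k | Inr k \<Rightarrow> U k)"

lemma E_meas[measurable]: "E k \<in> borel_measurable M"
  using distributed_measurable[OF Ed[of k]] by (simp add: measurable_lborel1)
lemma U_meas[measurable]: "U k \<in> borel_measurable M"
  using distributed_measurable[OF Ud[of k]] by (simp add: measurable_lborel1)
lemma V_meas[measurable]: "V i \<in> borel_measurable M"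
  by (cases i) simp_all

lemma Vp_meas[measurable]: "Vp E U \<in> M \<rightarrow>\<^sub>M PiM UNIV (\<lambda>_. borel)"
proof -
  have "(\<lambda>\<omega>. \<lambda>i\<in>UNIV. V i \<omega>) \<in> M \<rightarrow>\<^sub>M PiM UNIV (\<lambda>_. borel)"
    by (intro measurable_restrict) simp
  moreover have "(\<lambda>\<omega>. \<lambda>i\<in>UNIV. V i \<omega>) = Vp E U"
    by (auto simp: Vp_def fun_eq_iff split: sum.split)
  ultimately show ?thesis by simp
qed

lemma Vp_Inl[simp]: "Vp E U \<omega> (Inl k) = E k \<omega>" and Vp_Inr[simp]: "Vp E U \<omega> (Inr k) = U k \<omega>"
  by (simp_all add: Vp_def)

lemma E_nonneg_AE: "AE \<omega> in M. \<forall>j. 0 \<le> E j \<omega>"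
proof -
  have "AE \<omega> in M. 0 \<le> E j \<omega>" for j
  proof -
    have "(AE \<omega> in M. 0 \<le> E j \<omega>) = (AE x in lborel. 0 < exponential_density 1 x \<longrightarrow> 0 \<le> x)"
      using distributed_AE2[OF Ed[of j], of "\<lambda>x. 0 \<le> x"] by simp
    also have "\<dots>" by (auto simp: exponential_density_def)
    finally show ?thesis .
  qed
  then show ?thesis by (simp add: AE_all_countable)
qed

lemma prob_U_less: "prob {\<omega> \<in> space M. U k \<omega> < p} = p"
proof -
  have "emeasure M (U k -` {..<p} \<inter> space M) = (\<integral>\<^sup>+x. ennreal (indicator {0..1::real} x / measure lborel {0..1::real}) * indicator {..<p} x \<partial>lborel)"
    by (rule distributed_emeasure[OF Ud]) simp
  also have "\<dots> = (\<integral>\<^sup>+x. indicator {0..<p} x \<partial>lborel)"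
    using p1 by (intro nn_integral_cong) (auto split: split_indicator)
  also have "\<dots> = ennreal p" using p0 by simp
  finally have "emeasure M {\<omega> \<in> space M. U k \<omega> < p} = ennreal p"
    by (simp add: vimage_def Int_def conj_commute)
  then show ?thesis using p0 by (simp add: emeasure_eq_measure)
qed

lemma Dd_meas[measurable]: "(\<lambda>\<omega>. Dd p (Vp E U \<omega>) k) \<in> borel_measurable M"
  by (simp add: Dd_def)

lemma Dd_integral: "expectation (\<lambda>\<omega>. Dd p (Vp E U \<omega>) k) = 0"
proof -
  have "expectation (\<lambda>\<omega>. Dd p (Vp E U \<omega>) k) = expectation (\<lambda>\<omega>. p - indicator {\<omega> \<in> space M. U k \<omega> < p} \<omega>)"
    by (intro Bochner_Integration.integral_cong) (auto simp: Dd_def indicator_def)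
  also have "\<dots> = p - prob {\<omega> \<in> space M. U k \<omega> < p}"
    by (subst Bochner_Integration.integral_diff) (auto simp: prob_space emeasure_eq_measure intro!: integrable_real_indicator)
  finally show ?thesis by (simp add: prob_U_less)
qed

lemma Dd_integrable[simp]: "integrable M (\<lambda>\<omega>. Dd p (Vp E U \<omega>) k)"
  by (rule integrable_const_bound[where B=1]) (use p0 p1 in \<open>auto simp: Dd_def\<close>)

lemma mgf_E:
  assumes c: "-1 < c"
  shows "(\<integral>\<^sup>+\<omega>. ennreal (exp (- c * E k \<omega>)) \<partial>M) = ennreal (1 / (1 + c))"
proof -
  have "(\<integral>\<^sup>+\<omega>. ennreal (exp (- c * E k \<omega>)) \<partial>M) = (\<integral>\<^sup>+x. ennreal (exponential_density 1 x) * ennreal (exp (- c * x)) \<partial>lborel)"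
    by (rule distributed_nn_integral[OF Ed, symmetric]) simp
  also have "\<dots> = (\<integral>\<^sup>+x. ennreal (1 / (1 + c)) * ennreal (exponential_density (1 + c) x) \<partial>lborel)"
  proof (intro nn_integral_cong)
    fix x :: real
    have "exp (- x * 1) * exp (- c * x) = exp (- x * (1 + c))" by (simp add: exp_add[symmetric] algebra_simps)
    then have "exponential_density 1 x * exp (- c * x) = 1 / (1 + c) * exponential_density (1 + c) x"
      using c by (auto simp: exponential_density_def)
    then show "ennreal (exponential_density 1 x) * ennreal (exp (- c * x)) = ennreal (1 / (1 + c)) * ennreal (exponential_density (1 + c) x)"
      using c by (simp add: ennreal_mult'[symmetric] exponential_density_def)
  qed
  also have "\<dots> = ennreal (1 / (1 + c)) * (\<integral>\<^sup>+x. ennreal (exponential_density (1 + c) x) \<partial>lborel)"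
    by (rule nn_integral_cmult) simp
  also have "(\<integral>\<^sup>+x. ennreal (exponential_density (1 + c) x) \<partial>lborel) = 1"
  proof -
    interpret ps: prob_space "density lborel (exponential_density (1 + c))"
      using c by (intro prob_space_exponential_density) simp
    have "emeasure (density lborel (exponential_density (1 + c))) UNIV = 1"
      using ps.emeasure_space_1 by simp
    then show ?thesis by (simp add: emeasure_density)
  qed
  finally show ?thesis by simp
qed

end


lemma meas_aa_Pi:
  assumes "\<And>l. l < j \<Longrightarrow> Inr l \<in> I"
  shows "(\<lambda>x. aa p x j) \<in> borel_measurable (PiM I (\<lambda>_. borel))"
proof -
  have [measurable]: "(\<lambda>x. x (Inr l)) \<in> borel_measurable (PiM I (\<lambda>_. borel))" if "l < j" for l
    using assms[OF that] by (rule measurable_component_singleton)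
  show ?thesis unfolding aa_real
    by (intro borel_measurable_add borel_measurable_const borel_measurable_sum) measurable
qed

lemma meas_TT_Pi:
  assumes "\<And>l. l < m \<Longrightarrow> Inl l \<in> I" "\<And>l. Suc l < m \<Longrightarrow> Inr l \<in> I"
  shows "(\<lambda>x. TT p x m) \<in> borel_measurable (PiM I (\<lambda>_. borel))"
proof -
  have [measurable]: "(\<lambda>x. x (Inl l)) \<in> borel_measurable (PiM I (\<lambda>_. borel))" if "l < m" for l
    using assms(1)[OF that] by (rule measurable_component_singleton)
  have [measurable]: "(\<lambda>x. aa p x l) \<in> borel_measurable (PiM I (\<lambda>_. borel))" if "l < m" for l
    using that by (intro meas_aa_Pi assms(2)) simp
  show ?thesis unfolding TT_def
    by (intro borel_measurable_sum) measurable
qed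

lemma ineq1:
  fixes \<theta> :: real assumes "0 < \<theta>" "\<theta> \<le> 1/3"
  shows "exp (-\<theta>) * (1 / (1 - \<theta>)) \<le> exp (\<theta>^2)"
proof -
  have "1 + (\<theta> + \<theta>^2) + (\<theta> + \<theta>^2)^2 / 2 \<le> exp (\<theta> + \<theta>^2)"
    by (rule exp_lower_Taylor_quadratic) (use assms in simp)
  moreover have "\<theta>^2 / 2 \<le> (\<theta> + \<theta>^2)^2 / 2"
    using assms by (intro divide_right_mono power_mono) auto
  ultimately have e: "1 + \<theta> + 3/2 * \<theta>^2 \<le> exp (\<theta> + \<theta>^2)" by simp
  have "1 \<le> (1 - \<theta>) * (1 + \<theta> + 3/2 * \<theta>^2)"
  proof -
    have "(1 - \<theta>) * (1 + \<theta> + 3/2 * \<theta>^2) = 1 + \<theta>^2 * (1/2 - 3/2 * \<theta>)"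
      by (simp add: field_simps power2_eq_square power3_eq_cube)
    moreover have "0 \<le> \<theta>^2 * (1/2 - 3/2 * \<theta>)" using assms by simp
    ultimately show ?thesis by simp
  qed
  then have "1 / (1 - \<theta>) \<le> 1 + \<theta> + 3/2 * \<theta>^2"
    using assms by (simp add: divide_simps mult.commute)
  also note e
  finally have "1 / (1 - \<theta>) \<le> exp (\<theta> + \<theta>^2)" .
  then have "exp (-\<theta>) * (1 / (1 - \<theta>)) \<le> exp (-\<theta>) * exp (\<theta> + \<theta>^2)"
    by (intro mult_left_mono) auto
  also have "\<dots> = exp (\<theta>^2)" by (simp add: exp_add[symmetric])
  finally show ?thesis .
qed

lemma ineq2:
  fixes \<theta> :: real assumes "0 < \<theta>" "\<theta> \<le> 1"
  shows "exp \<theta> * (1 / (1 + \<theta>)) \<le> exp (\<theta>^2)"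
proof -
  define y where "y = \<theta> - \<theta>^2"
  have "\<theta> * \<theta> \<le> \<theta>" using assms by (intro mult_left_le_one_le) auto
  moreover have "0 \<le> \<theta> * \<theta>" by simp
  ultimately have y: "0 \<le> y" "y \<le> 1" "y \<le> \<theta>"
    using assms unfolding y_def power2_eq_square by linarith+
  have "exp y \<le> 1 + y + y^2" by (rule exp_bound) (use y in auto)
  also have "y^2 \<le> \<theta>^2" using y by (intro power_mono) auto
  then have "1 + y + y^2 \<le> 1 + \<theta>" by (simp add: y_def)
  finally have "exp y \<le> 1 + \<theta>" by simp
  then have "exp \<theta> * (1 / (1 + \<theta>)) \<le> exp \<theta> * (1 / exp y)"
    using assms by (intro mult_left_mono divide_left_mono) auto
  also have "\<dots> = exp (\<theta>^2)" by (simp add: y_def exp_diff)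
  finally show ?thesis .
qed

context pctx begin

lemma TT_meas[measurable]: "(\<lambda>\<omega>. TT p (Vp E U \<omega>) m) \<in> borel_measurable M"
  by (rule measurable_compose[OF Vp_meas meas_TT_Pi]) auto
lemma aa_meas[measurable]: "(\<lambda>\<omega>. aa p (Vp E U \<omega>) m) \<in> borel_measurable M"
  by (rule measurable_compose[OF Vp_meas meas_aa_Pi]) auto

lemma indep_E_prod:
  fixes g :: "nat \<Rightarrow> real \<Rightarrow> ennreal"
  assumes J: "finite J" and g[measurable]: "\<And>j. g j \<in> borel_measurable borel"
  shows "(\<integral>\<^sup>+\<omega>. (\<Prod>j\<in>J. g j (E j \<omega>)) \<partial>M) = (\<Prod>j\<in>J. \<integral>\<^sup>+\<omega>. g j (E j \<omega>) \<partial>M)"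
proof -
  have iv: "indep_vars (\<lambda>_. borel) (\<lambda>i \<omega>. g (projl i) (V i \<omega>)) (Inl ` J)"
    by (rule indep_vars_compose2[OF indep_vars_subset[OF ind]]) auto
  have "(\<integral>\<^sup>+\<omega>. (\<Prod>i\<in>Inl ` J. g (projl i) (V i \<omega>)) \<partial>M) = (\<Prod>i\<in>Inl ` J. \<integral>\<^sup>+\<omega>. g (projl i) (V i \<omega>) \<partial>M)"
    by (rule indep_vars_nn_integral[OF _ iv]) (use J in auto)
  then show ?thesis
    by (simp add: prod.reindex inj_on_def)
qed

lemma chernoff_E:
  fixes h :: "nat \<Rightarrow> real \<Rightarrow> real"
  assumes J: "finite J" and th: "0 < \<theta>" and h[measurable]: "\<And>j. h j \<in> borel_measurable borel"
  shows "emeasure M {\<omega>\<in>space M. x \<le> (\<Sum>j\<in>J. h j (E j \<omega>))}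
     \<le> ennreal (exp (-\<theta> * x)) * (\<Prod>j\<in>J. \<integral>\<^sup>+\<omega>. ennreal (exp (\<theta> * h j (E j \<omega>))) \<partial>M)"
proof -
  have "emeasure M {\<omega>\<in>space M. x \<le> (\<Sum>j\<in>J. h j (E j \<omega>))}
     \<le> ennreal (exp (-\<theta> * x)) * (\<integral>\<^sup>+\<omega>. ennreal (exp (\<theta> * (\<Sum>j\<in>J. h j (E j \<omega>)))) * indicator (space M) \<omega> \<partial>M)"
    by (rule Chernoff_ineq_nn_integral_ge[OF th]) auto
  also have "(\<integral>\<^sup>+\<omega>. ennreal (exp (\<theta> * (\<Sum>j\<in>J. h j (E j \<omega>)))) * indicator (space M) \<omega> \<partial>M)
      = (\<integral>\<^sup>+\<omega>. (\<Prod>j\<in>J. ennreal (exp (\<theta> * h j (E j \<omega>)))) \<partial>M)"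
    by (intro nn_integral_cong)
      (simp add: sum_distrib_left exp_sum J prod_ennreal)
  also have "\<dots> = (\<Prod>j\<in>J. \<integral>\<^sup>+\<omega>. ennreal (exp (\<theta> * h j (E j \<omega>))) \<partial>M)"
    by (rule indep_E_prod[OF J, where g="\<lambda>j y. ennreal (exp (\<theta> * h j y))"]) simp
  finally show ?thesis .
qed

lemma prod_frac: "(\<Prod>j<n. (real j + 1) / (real j + 3)) = 2 / ((real n + 1) * (real n + 2))"
proof (induction n)
  case 0 then show ?case by simp
next
  case (Suc n)
  have "(\<Prod>j<Suc n. (real j + 1) / (real j + 3)) = 2 / ((real n + 1) * (real n + 2)) * ((real n + 1) / (real n + 3))"
    using Suc by simp
  also have "\<dots> = 2 / ((real n + 2) * (real n + 3))"
    by (simp add: frac_eq_eq add_pos_pos)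
  finally show ?case by (simp add: add.commute add.left_commute)
qed

lemma explosion_bound:
  "prob {\<omega>\<in>space M. TT p (Vp E U \<omega>) (Suc k) \<le> t} \<le> exp (2 * t / p) * (2 / ((real k + 2) * (real k + 3)))"
proof -
  define n where "n = Suc k"
  have "emeasure M {\<omega>\<in>space M. TT p (Vp E U \<omega>) n \<le> t}
      \<le> emeasure M {\<omega>\<in>space M. - (t / p) \<le> (\<Sum>j\<in>{..<n}. - (E j \<omega> / (real j + 1)))}"
  proof (rule emeasure_mono_AE)
    show "AE \<omega> in M. \<omega> \<in> {\<omega>\<in>space M. TT p (Vp E U \<omega>) n \<le> t} \<longrightarrow>
        \<omega> \<in> {\<omega>\<in>space M. - (t / p) \<le> (\<Sum>j\<in>{..<n}. - (E j \<omega> / (real j + 1)))}"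
      using E_nonneg_AE
    proof eventually_elim
      case (elim \<omega>)
      have "p * (\<Sum>j<n. E j \<omega> / (real j + 1)) \<le> TT p (Vp E U \<omega>) n"
        unfolding TT_def sum_distrib_left
      proof (intro sum_mono)
        fix j assume "j \<in> {..<n}"
        have "E j \<omega> / (real j + 1) \<le> E j \<omega> / aa p (Vp E U \<omega>) j"
          using elim aa_pos[of p "Vp E U \<omega>" j] aa_le[of p "Vp E U \<omega>" j]
          by (intro divide_left_mono) auto
        then have "p * (E j \<omega> / (real j + 1)) \<le> p * (E j \<omega> / aa p (Vp E U \<omega>) j)"
          by (rule mult_left_mono) (use p0 in auto)
        then show "p * (E j \<omega> / (real j + 1)) \<le> p * Vp E U \<omega> (Inl j) / aa p (Vp E U \<omega>) j"
          by simp
      qed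
      then show ?case using p0 by (auto simp: sum_negf field_simps)
    qed
  qed simp
  also have "\<dots> \<le> ennreal (exp (- 2 * - (t / p))) * (\<Prod>j\<in>{..<n}. \<integral>\<^sup>+\<omega>. ennreal (exp (2 * - (E j \<omega> / (real j + 1)))) \<partial>M)"
    by (rule chernoff_E[where h="\<lambda>j y. - (y / (real j + 1))"]) auto
  also have "(\<Prod>j\<in>{..<n}. \<integral>\<^sup>+\<omega>. ennreal (exp (2 * - (E j \<omega> / (real j + 1)))) \<partial>M)
     = (\<Prod>j\<in>{..<n}. ennreal ((real j + 1) / (real j + 3)))"
  proof (intro prod.cong refl)
    fix j assume "j \<in> {..<n}"
    have "(\<integral>\<^sup>+\<omega>. ennreal (exp (2 * - (E j \<omega> / (real j + 1)))) \<partial>M) = (\<integral>\<^sup>+\<omega>. ennreal (exp (- (2 / (real j + 1)) * E j \<omega>)) \<partial>M)"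
      by (simp add: field_simps)
    also have "\<dots> = ennreal (1 / (1 + 2 / (real j + 1)))"
      by (rule mgf_E) (simp add: less_le_trans[of _ 0])
    also have "1 / (1 + 2 / (real j + 1)) = (real j + 1) / (real j + 3)"
      by (simp add: field_simps)
    finally show "(\<integral>\<^sup>+\<omega>. ennreal (exp (2 * - (E j \<omega> / (real j + 1)))) \<partial>M) = ennreal ((real j + 1) / (real j + 3))" .
  qed
  also have "\<dots> = ennreal (2 / ((real n + 1) * (real n + 2)))"
    by (simp add: prod_ennreal prod_frac)
  finally have "emeasure M {\<omega>\<in>space M. TT p (Vp E U \<omega>) n \<le> t} \<le> ennreal (exp (2 * t / p) * (2 / ((real n + 1) * (real n + 2))))"
    by (simp add: ennreal_mult'[symmetric])
  then show ?thesis
    by (simp add: emeasure_eq_measure n_def ennreal_le_iff add.commute)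
qed

lemma explosion_summable:
  "summable (\<lambda>k. prob {\<omega>\<in>space M. TT p (Vp E U \<omega>) (Suc k) \<le> t})"
proof (rule summable_comparison_test_ev)
  show "eventually (\<lambda>k. norm (prob {\<omega>\<in>space M. TT p (Vp E U \<omega>) (Suc k) \<le> t}) \<le> exp (2 * t / p) * (2 * (1 / (real k)^2))) sequentially"
    using eventually_gt_at_top[of "0::nat"]
  proof eventually_elim
    case (elim k)
    have "2 / ((real k + 2) * (real k + 3)) \<le> 2 * (1 / (real k)^2)"
      using elim by (simp add: power2_eq_square divide_simps mult_mono)
    then have "exp (2 * t / p) * (2 / ((real k + 2) * (real k + 3))) \<le> exp (2 * t / p) * (2 * (1 / (real k)^2))"
      by (intro mult_left_mono) auto
    then show ?case using explosion_bound[of k t] by simp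
  qed
  show "summable (\<lambda>k. exp (2 * t / p) * (2 * (1 / (real k)^2)))"
    by (intro summable_mult summable_inv_sq)
qed

lemma nonexplosion_AE: "AE \<omega> in M. \<exists>k. t < TT p (Vp E U \<omega>) (Suc k)"
proof -
  have "AE \<omega> in M. eventually (\<lambda>k. \<omega> \<in> space M - {\<omega>\<in>space M. TT p (Vp E U \<omega>) (Suc k) \<le> t}) sequentially"
    by (rule borel_cantelli_AE1) (auto simp: explosion_summable emeasure_eq_measure)
  then show ?thesis
  proof eventually_elim
    case (elim \<omega>)
    then obtain k where "\<omega> \<in> space M - {\<omega>\<in>space M. TT p (Vp E U \<omega>) (Suc k) \<le> t}"
      by (auto simp: eventually_sequentially)
    then show ?case by (auto simp: not_le)
  qed
qed

lemma hoeffding_X: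
  assumes k: "0 < k" and eps: "0 \<le> \<epsilon>"
  shows "prob {\<omega>\<in>space M. \<epsilon> \<le> \<bar>\<Sum>j<k. ((if U j \<omega> < p then 1 else 0) - p)\<bar>} \<le> 2 * exp (-2 * \<epsilon>^2 / real k)"
proof -
  define X where "X = (\<lambda>i \<omega>. if V i \<omega> < p then 1 else (0::real))"
  have EX: "expectation (X i) = p" if "i \<in> Inr ` {..<k}" for i
  proof -
    from that obtain j where i: "i = Inr j" by auto
    have "expectation (X i) = expectation (indicator {\<omega>\<in>space M. U j \<omega> < p})"
      by (intro Bochner_Integration.integral_cong) (auto simp: X_def i indicator_def)
    also have "\<dots> = prob {\<omega>\<in>space M. U j \<omega> < p}"
      by (simp add: Int_absorb2)
    finally show ?thesis by (simp add: prob_U_less)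
  qed
  interpret H: Hoeffding_ineq M "Inr ` {..<k}" X "\<lambda>_. 0" "\<lambda>_. 1" "(\<Sum>i\<in>Inr ` {..<k}. expectation (X i))"
  proof unfold_locales
    show "finite (Inr ` {..<k})" by simp
    show "indep_vars (\<lambda>_. borel) X (Inr ` {..<k})"
      unfolding X_def by (rule indep_vars_compose2[OF indep_vars_subset[OF ind]]) auto
    show "AE x in M. X i x \<in> {0..1}" for i by (simp add: X_def)
  qed simp
  have mu: "(\<Sum>i\<in>Inr ` {..<k}. expectation (X i)) = real k * p"
    using EX by (simp add: card_image)
  have sumX: "(\<Sum>i\<in>Inr ` {..<k}. X i \<omega>) = (\<Sum>j<k. if U j \<omega> < p then 1 else 0)" for \<omega>
    by (simp add: sum.reindex X_def)
  have "prob {\<omega>\<in>space M. \<epsilon> \<le> \<bar>\<Sum>j<k. ((if U j \<omega> < p then 1 else 0) - p)\<bar>}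
      = prob {x\<in>space M. \<bar>(\<Sum>i\<in>Inr ` {..<k}. X i x) - (\<Sum>i\<in>Inr ` {..<k}. expectation (X i))\<bar> \<ge> \<epsilon>}"
    by (simp add: mu sumX sum_subtractf)
  also have "\<dots> \<le> 2 * exp (-2 * \<epsilon>^2 / real k)"
    using H.Hoeffding_ineq_abs_ge[OF eps] k by (simp add: card_image)
  finally show ?thesis .
qed

lemma SX_AE: "AE \<omega> in M. eventually (\<lambda>k. \<bar>\<Sum>j<k. ((if U j \<omega> < p then 1 else 0) - p)\<bar> \<le> real k powr (3/4)) sequentially"
proof -
  define A where "A = (\<lambda>k. {\<omega>\<in>space M. real k powr (3/4) < \<bar>\<Sum>j<k. ((if U j \<omega> < p then 1 else 0) - p)\<bar>})"
  have Am[measurable]: "A k \<in> sets M" for k unfolding A_def by measurable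
  have "summable (\<lambda>k. measure M (A k))"
  proof (rule summable_comparison_test_ev)
    show "eventually (\<lambda>k. norm (measure M (A k)) \<le> 2 * exp (-2 * (real k powr (3/4))^2 / real k)) sequentially"
      using eventually_gt_at_top[of "0::nat"]
    proof eventually_elim
      case (elim k)
      have "measure M (A k) \<le> prob {\<omega>\<in>space M. real k powr (3/4) \<le> \<bar>\<Sum>j<k. ((if U j \<omega> < p then 1 else 0) - p)\<bar>}"
        unfolding A_def by (intro finite_measure_mono) auto
      also have "\<dots> \<le> 2 * exp (-2 * (real k powr (3/4))^2 / real k)"
        by (rule hoeffding_X[OF elim]) simp
      finally show ?case by simp
    qed
    have "(\<lambda>k::nat. 2 * exp (-2 * (real k powr (3/4))^2 / real k)) \<in> O(\<lambda>k. (real k + 1) powr (3/4) / (real k)^2)"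
      by real_asymp
    then show "summable (\<lambda>k::nat. 2 * exp (-2 * (real k powr (3/4))^2 / real k))"
      by (rule summable_comparison_test_bigo[rotated]) (use summable_powr_54 in simp)
  qed
  then have "AE \<omega> in M. eventually (\<lambda>k. \<omega> \<in> space M - A k) sequentially"
    by (intro borel_cantelli_AE1) (auto simp: emeasure_eq_measure)
  then show ?thesis
    by eventually_elim (auto elim!: eventually_mono simp: A_def not_less)
qed

lemma tail_E:
  assumes th: "0 < \<theta>" "\<theta> \<le> 1/3"
  shows "prob {\<omega>\<in>space M. x \<le> (\<Sum>j<k. (E j \<omega> - 1))} \<le> exp (-\<theta>*x + real k * \<theta>^2)"
    and "prob {\<omega>\<in>space M. x \<le> (\<Sum>j<k. (1 - E j \<omega>))} \<le> exp (-\<theta>*x + real k * \<theta>^2)"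
proof -
  have f1: "(\<integral>\<^sup>+\<omega>. ennreal (exp (\<theta> * (E j \<omega> - 1))) \<partial>M) \<le> ennreal (exp (\<theta>^2))" for j
  proof -
    have "(\<integral>\<^sup>+\<omega>. ennreal (exp (\<theta> * (E j \<omega> - 1))) \<partial>M) = (\<integral>\<^sup>+\<omega>. ennreal (exp (-\<theta>)) * ennreal (exp (- (-\<theta>) * E j \<omega>)) \<partial>M)"
      by (intro nn_integral_cong) (simp add: ennreal_mult'[symmetric] exp_add[symmetric] algebra_simps)
    also have "\<dots> = ennreal (exp (-\<theta>)) * ennreal (1 / (1 + - \<theta>))"
      using th mgf_E[of "-\<theta>" j] by (subst nn_integral_cmult) simp_all
    also have "\<dots> = ennreal (exp (-\<theta>) * (1 / (1 - \<theta>)))"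
      using th by (simp add: ennreal_mult'[symmetric])
    also have "\<dots> \<le> ennreal (exp (\<theta>^2))" using ineq1[OF th] by (simp add: ennreal_leI)
    finally show ?thesis .
  qed
  have f2: "(\<integral>\<^sup>+\<omega>. ennreal (exp (\<theta> * (1 - E j \<omega>))) \<partial>M) \<le> ennreal (exp (\<theta>^2))" for j
  proof -
    have "(\<integral>\<^sup>+\<omega>. ennreal (exp (\<theta> * (1 - E j \<omega>))) \<partial>M) = (\<integral>\<^sup>+\<omega>. ennreal (exp \<theta>) * ennreal (exp (- \<theta> * E j \<omega>)) \<partial>M)"
      by (intro nn_integral_cong) (simp add: ennreal_mult'[symmetric] exp_add[symmetric] algebra_simps)
    also have "\<dots> = ennreal (exp \<theta>) * ennreal (1 / (1 + \<theta>))"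
      using th mgf_E[of "\<theta>" j] by (subst nn_integral_cmult) simp_all
    also have "\<dots> = ennreal (exp \<theta> * (1 / (1 + \<theta>)))"
      using th by (simp add: ennreal_mult'[symmetric])
    also have "\<dots> \<le> ennreal (exp (\<theta>^2))" using ineq2[of \<theta>] th by (simp add: ennreal_leI)
    finally show ?thesis .
  qed
  have "emeasure M {\<omega>\<in>space M. x \<le> (\<Sum>j\<in>{..<k}. (E j \<omega> - 1))}
      \<le> ennreal (exp (-\<theta> * x)) * (\<Prod>j\<in>{..<k}. \<integral>\<^sup>+\<omega>. ennreal (exp (\<theta> * (E j \<omega> - 1))) \<partial>M)"
    by (rule chernoff_E[where h="\<lambda>j y. y - 1"]) (use th in auto)
  also have "\<dots> \<le> ennreal (exp (-\<theta> * x)) * (\<Prod>j\<in>{..<k}. ennreal (exp (\<theta>^2)))"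
    by (intro mult_left_mono prod_mono_ennreal f1) auto
  also have "\<dots> = ennreal (exp (-\<theta>*x + real k * \<theta>^2))"
    by (simp add: ennreal_power ennreal_mult'[symmetric] exp_diff exp_minus exp_of_nat_mult divide_inverse mult.commute)
  finally show "prob {\<omega>\<in>space M. x \<le> (\<Sum>j<k. (E j \<omega> - 1))} \<le> exp (-\<theta>*x + real k * \<theta>^2)"
    by (simp add: emeasure_eq_measure)
  have "emeasure M {\<omega>\<in>space M. x \<le> (\<Sum>j\<in>{..<k}. (1 - E j \<omega>))}
      \<le> ennreal (exp (-\<theta> * x)) * (\<Prod>j\<in>{..<k}. \<integral>\<^sup>+\<omega>. ennreal (exp (\<theta> * (1 - E j \<omega>))) \<partial>M)"
    by (rule chernoff_E[where h="\<lambda>j y. 1 - y"]) (use th in auto)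
  also have "\<dots> \<le> ennreal (exp (-\<theta> * x)) * (\<Prod>j\<in>{..<k}. ennreal (exp (\<theta>^2)))"
    by (intro mult_left_mono prod_mono_ennreal f2) auto
  also have "\<dots> = ennreal (exp (-\<theta>*x + real k * \<theta>^2))"
    by (simp add: ennreal_power ennreal_mult'[symmetric] exp_diff exp_minus exp_of_nat_mult divide_inverse mult.commute)
  finally show "prob {\<omega>\<in>space M. x \<le> (\<Sum>j<k. (1 - E j \<omega>))} \<le> exp (-\<theta>*x + real k * \<theta>^2)"
    by (simp add: emeasure_eq_measure)
qed

lemma SE_AE: "AE \<omega> in M. eventually (\<lambda>k. \<bar>\<Sum>j<k. (E j \<omega> - 1)\<bar> \<le> real k powr (3/4)) sequentially"
proof -
  define A where "A = (\<lambda>k. {\<omega>\<in>space M. real k powr (3/4) < \<bar>\<Sum>j<k. (E j \<omega> - 1)\<bar>})"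
  define g where "g = (\<lambda>k::nat. 2 * exp (- (2/9) * sqrt (real k)))"
  have Am[measurable]: "A k \<in> sets M" for k unfolding A_def by measurable
  have "summable (\<lambda>k. measure M (A k))"
  proof (rule summable_comparison_test_ev)
    show "eventually (\<lambda>k. norm (measure M (A k)) \<le> g k) sequentially"
      using eventually_gt_at_top[of "0::nat"]
    proof eventually_elim
      case (elim k)
      define \<theta> where "\<theta> = real k powr (-1/4) / 3"
      define x where "x = real k powr (3/4)"
      have "1 \<le> real k powr (1/4)" using elim by (intro ge_one_powr_ge_zero) auto
      then have "real k powr (-1/4) \<le> 1" by (auto simp: powr_minus_divide divide_le_eq_1)
      then have th: "0 < \<theta>" "\<theta> \<le> 1/3" using elim by (auto simp: \<theta>_def)
      have exid: "-\<theta>*x + real k * \<theta>^2 = - (2/9) * sqrt (real k)"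
      proof -
        define r where "r = real k powr (1/4)"
        have r0: "0 < r" using elim by (simp add: r_def)
        have e1: "real k powr (-1/4) = 1 / r" by (simp add: r_def powr_minus_divide)
        have e2: "real k powr (3/4) = r ^ 3" unfolding r_def using elim by (simp add: powr_power)
        have e3: "real k = r ^ 4" unfolding r_def using elim by (simp add: powr_power)
        have e4: "sqrt (real k) = r ^ 2" unfolding r_def using elim
          by (simp add: powr_power powr_half_sqrt[symmetric])
        have alg: "-(1 / r / 3) * r ^ 3 + r ^ 4 * (1 / r / 3)^2 = - (2/9) * r^2"
          using r0 by (simp add: field_simps power2_eq_square power3_eq_cube numeral_eq_Suc)
        show ?thesis unfolding \<theta>_def x_def e1 e2 e4 by (subst e3) (rule alg)
      qed
      have "A k \<subseteq> {\<omega>\<in>space M. x \<le> (\<Sum>j<k. (E j \<omega> - 1))} \<union> {\<omega>\<in>space M. x \<le> (\<Sum>j<k. (1 - E j \<omega>))}"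
      proof
        fix \<omega> assume "\<omega> \<in> A k"
        moreover have "(\<Sum>j<k. (1 - E j \<omega>)) = - (\<Sum>j<k. (E j \<omega> - 1))"
          by (simp add: sum_negf[symmetric])
        ultimately show "\<omega> \<in> {\<omega>\<in>space M. x \<le> (\<Sum>j<k. (E j \<omega> - 1))} \<union> {\<omega>\<in>space M. x \<le> (\<Sum>j<k. (1 - E j \<omega>))}"
          by (auto simp: A_def x_def abs_if split: if_splits)
      qed
      then have "measure M (A k) \<le> measure M ({\<omega>\<in>space M. x \<le> (\<Sum>j<k. (E j \<omega> - 1))} \<union> {\<omega>\<in>space M. x \<le> (\<Sum>j<k. (1 - E j \<omega>))})"
        by (intro finite_measure_mono) auto
      also have "\<dots> \<le> prob {\<omega>\<in>space M. x \<le> (\<Sum>j<k. (E j \<omega> - 1))} + prob {\<omega>\<in>space M. x \<le> (\<Sum>j<k. (1 - E j \<omega>))}"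
        by (intro measure_Un_le) auto
      also have "\<dots> \<le> exp (-\<theta>*x + real k * \<theta>^2) + exp (-\<theta>*x + real k * \<theta>^2)"
        by (intro add_mono tail_E th)
      also have "\<dots> = g k" using exid by (simp add: g_def)
      finally show ?case by simp
    qed
    have "g \<in> O(\<lambda>k. (real k + 1) powr (3/4) / (real k)^2)"
      unfolding g_def by real_asymp
    then show "summable g"
      by (rule summable_comparison_test_bigo[rotated]) (use summable_powr_54 in simp)
  qed
  then have "AE \<omega> in M. eventually (\<lambda>k. \<omega> \<in> space M - A k) sequentially"
    by (intro borel_cantelli_AE1) (auto simp: emeasure_eq_measure)
  then show ?thesis
    by eventually_elim (auto elim!: eventually_mono simp: A_def not_less)
qed

end


lemma cnt_meas_Pi:
  assumes "\<And>l. l < m \<Longrightarrow> Inr l \<in> I"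
  shows "(\<lambda>x. cnt p x m) \<in> measurable (PiM I (\<lambda>_. borel)) (count_space UNIV)"
  unfolding measurable_count_space_eq2_countable
proof safe
  fix c :: nat
  have [measurable]: "(\<lambda>x. aa p x m) \<in> borel_measurable (PiM I (\<lambda>_. borel))"
    by (rule meas_aa_Pi) (rule assms)
  have "(\<lambda>x. cnt p x m) -` {c} \<inter> space (PiM I (\<lambda>_. borel)) = {x \<in> space (PiM I (\<lambda>_. borel)). aa p x m = real (Suc c)}"
    by (auto simp: aa_def)
  also have "\<dots> \<in> sets (PiM I (\<lambda>_. borel))" by measurable
  finally show "(\<lambda>x. cnt p x m) -` {c} \<inter> space (PiM I (\<lambda>_. borel)) \<in> sets (PiM I (\<lambda>_. borel))" .
qed simp

lemma JC_meas_Pi: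
  assumes "\<And>l. l < m \<Longrightarrow> Inr l \<in> I"
  shows "(\<lambda>x. JC p x m) \<in> measurable (PiM I (\<lambda>_. borel)) (count_space UNIV)"
proof -
  have "(\<lambda>x. (\<lambda>c. (Suc c, Suc m - c)) (cnt p x m)) \<in> measurable (PiM I (\<lambda>_. borel)) (count_space UNIV)"
    by (rule measurable_compose[OF cnt_meas_Pi measurable_count_space]) (use assms in auto)
  then show ?thesis by (simp add: JC_def)
qed

lemma PP_meas: "PP p r \<in> measurable (PiM UNIV (\<lambda>_. borel)) (count_space UNIV)"
proof -
  have [measurable]: "(\<lambda>x. TT p x m) \<in> borel_measurable (PiM UNIV (\<lambda>_. borel))" for m
    by (rule meas_TT_Pi) auto
  have [measurable]: "(\<lambda>x. JC p x m) \<in> measurable (PiM UNIV (\<lambda>_. borel)) (count_space UNIV)" for m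
    by (rule JC_meas_Pi) auto
  have NNm: "NN p r \<in> measurable (PiM UNIV (\<lambda>_. borel)) (count_space UNIV)"
    unfolding NN_def[abs_def] by measurable
  have "(\<lambda>x. JC p x (NN p r x)) \<in> measurable (PiM UNIV (\<lambda>_. borel)) (count_space UNIV)"
    by (rule measurable_compose_countable[OF _ NNm]) simp
  then show ?thesis unfolding PP_def[abs_def] by measurable
qed

definition Lk :: "nat \<Rightarrow> (nat + nat) set" where "Lk k = range Inl \<union> Inr ` {..<k}"

lemma cnt_agree: "(\<And>l. l < m \<Longrightarrow> x (Inr l) = y (Inr l)) \<Longrightarrow> cnt p x m = cnt p y m"
  unfolding cnt_def by (intro sum.cong) auto
lemma aa_agree: "(\<And>l. l < m \<Longrightarrow> x (Inr l) = y (Inr l)) \<Longrightarrow> aa p x m = aa p y m"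
  unfolding aa_def using cnt_agree by metis
lemma TT_agree:
  assumes "\<And>i. i \<in> Lk k \<Longrightarrow> x i = y i" "m \<le> Suc k"
  shows "TT p x m = TT p y m"
  unfolding TT_def
proof (intro sum.cong refl)
  fix j assume j: "j \<in> {..<m}"
  have "x (Inl j) = y (Inl j)" using assms(1)[of "Inl j"] by (simp add: Lk_def)
  moreover have "aa p x j = aa p y j"
    using j assms by (intro aa_agree) (auto simp: Lk_def)
  ultimately show "p * x (Inl j) / aa p x j = p * y (Inl j) / aa p y j" by simp
qed
lemma JC_agree:
  assumes "\<And>i. i \<in> Lk k \<Longrightarrow> x i = y i" "m \<le> k"
  shows "JC p x m = JC p y m"
proof -
  have "cnt p x m = cnt p y m" using assms by (intro cnt_agree) (auto simp: Lk_def)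
  then show ?thesis by (simp add: JC_def)
qed

lemma PP_local:
  assumes "\<exists>i\<le>k. s < TT p x (Suc i)" "r \<le> s"
  shows "PP p r x \<in> B \<longleftrightarrow> (\<exists>m\<le>k. (r < TT p x (Suc m) \<and> (\<forall>m'<m. \<not> r < TT p x (Suc m'))) \<and> JC p x m \<in> B)"
proof -
  from assms obtain i where i: "i \<le> k" "r < TT p x (Suc i)" by force
  then have ex: "\<exists>k. r < TT p x (Suc k)" by blast
  have le: "NN p r x \<le> k" using i unfolding NN_def by (meson Least_le order_trans)
  have P: "r < TT p x (Suc (NN p r x))" "\<forall>m'<NN p r x. \<not> r < TT p x (Suc m')"
    using NN_props[OF ex] by auto
  have uniq: "m = NN p r x" if "r < TT p x (Suc m)" "\<forall>m'<m. \<not> r < TT p x (Suc m')" for m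
    using that P by (metis linorder_neqE_nat)
  show ?thesis
  proof
    assume "PP p r x \<in> B"
    then have "JC p x (NN p r x) \<in> B" using ex by (simp add: PP_def)
    then show "\<exists>m\<le>k. (r < TT p x (Suc m) \<and> (\<forall>m'<m. \<not> r < TT p x (Suc m'))) \<and> JC p x m \<in> B"
      using le P by blast
  next
    assume "\<exists>m\<le>k. (r < TT p x (Suc m) \<and> (\<forall>m'<m. \<not> r < TT p x (Suc m'))) \<and> JC p x m \<in> B"
    then obtain m where "r < TT p x (Suc m)" "\<forall>m'<m. \<not> r < TT p x (Suc m')" "JC p x m \<in> B" by blast
    then show "PP p r x \<in> B" using uniq ex by (simp add: PP_def)
  qed
qed

lemma ex_le_iff:
  assumes "\<exists>k. t < TT p x (Suc k)"
  shows "(\<exists>i\<le>k. t < TT p x (Suc i)) \<longleftrightarrow> NN p t x \<le> k"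
proof
  assume "\<exists>i\<le>k. t < TT p x (Suc i)"
  then obtain i where "i \<le> k" "t < TT p x (Suc i)" by blast
  then show "NN p t x \<le> k" unfolding NN_def by (meson Least_le order_trans)
next
  assume "NN p t x \<le> k"
  then show "\<exists>i\<le>k. t < TT p x (Suc i)" using NN_props(1)[OF assms] by blast
qed

lemma Ik_set:
  assumes ex: "\<exists>k. t < TT p x (Suc k)" and st: "s \<le> t"
  shows "{k. (\<exists>i\<le>k. s < TT p x (Suc i)) \<and> \<not> (\<exists>i\<le>k. t < TT p x (Suc i))} = {NN p s x..<NN p t x}"
    and "ZZ p t x - ZZ p s x = (\<Sum>k\<in>{NN p s x..<NN p t x}. Dd p x k)"
    and "NN p s x \<le> NN p t x" and "\<exists>k. s < TT p x (Suc k)"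
proof -
  have t1: "t < TT p x (Suc (NN p t x))" by (rule NN_props(1)[OF ex])
  then show exs: "\<exists>k. s < TT p x (Suc k)" using st by (meson le_less_trans)
  show le: "NN p s x \<le> NN p t x" using t1 st unfolding NN_def[of p s x] by (meson Least_le le_less_trans)
  show "{k. (\<exists>i\<le>k. s < TT p x (Suc i)) \<and> \<not> (\<exists>i\<le>k. t < TT p x (Suc i))} = {NN p s x..<NN p t x}"
    using ex_le_iff[OF ex] ex_le_iff[OF exs] by auto
  have "ZZ p t x - ZZ p s x = Zc p x (NN p t x) - Zc p x (NN p s x)"
    using ex exs by (simp add: ZZ_eq)
  also have "\<dots> = (\<Sum>k\<in>{NN p s x..<NN p t x}. Zc p x (Suc k) - Zc p x k)"
    by (rule sum_Suc_diff'[symmetric]) (rule le)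
  finally show "ZZ p t x - ZZ p s x = (\<Sum>k\<in>{NN p s x..<NN p t x}. Dd p x k)"
    by (simp add: Zc_Suc)
qed

context pctx begin

definition Rk :: "nat \<Rightarrow> 'a \<Rightarrow> (nat + nat) \<Rightarrow> real" where
  "Rk k \<omega> = restrict (\<lambda>i. V i \<omega>) (Lk k)"
definition Gk :: "nat \<Rightarrow> 'a measure" where
  "Gk k = vimage_algebra (space M) (Rk k) (PiM (Lk k) (\<lambda>_. borel))"

lemma Vp_eq: "Vp E U \<omega> = (\<lambda>i. V i \<omega>)"
  by (auto simp: Vp_def fun_eq_iff split: sum.split)

lemma Rk_meas: "Rk k \<in> M \<rightarrow>\<^sub>M PiM (Lk k) (\<lambda>_. borel)"
  unfolding Rk_def[abs_def] by (intro measurable_restrict) simp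

lemma Rk_agree: "i \<in> Lk k \<Longrightarrow> Vp E U \<omega> i = Rk k \<omega> i"
  by (simp add: Rk_def Vp_eq)

lemma Gk_pred:
  assumes Q: "Measurable.pred (PiM (Lk k) (\<lambda>_. borel)) Q"
  shows "{\<omega>\<in>space M. Q (Rk k \<omega>)} \<in> sets (Gk k)"
proof -
  have "Rk k \<in> Gk k \<rightarrow>\<^sub>M PiM (Lk k) (\<lambda>_. borel)"
    unfolding Gk_def by (rule measurable_vimage_algebra1) (use measurable_space[OF Rk_meas] in auto)
  then have "Measurable.pred (Gk k) (\<lambda>\<omega>. Q (Rk k \<omega>))"
    by (rule measurable_compose) (rule Q)
  then have "{\<omega>\<in>space (Gk k). Q (Rk k \<omega>)} \<in> sets (Gk k)" by (simp add: pred_def)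
  then show ?thesis by (simp add: Gk_def)
qed

lemma Gk_sets: "sets (Gk k) \<subseteq> sets M"
  unfolding Gk_def by (subst sets_vimage_algebra2) (use measurable_space[OF Rk_meas] measurable_sets[OF Rk_meas] in auto)

lemma TT_meas_Lk: "i \<le> k \<Longrightarrow> (\<lambda>x. TT p x (Suc i)) \<in> borel_measurable (PiM (Lk k) (\<lambda>_. borel))"
  by (rule meas_TT_Pi) (auto simp: Lk_def)

lemma pred_C: "Measurable.pred (PiM (Lk k) (\<lambda>_. borel)) (\<lambda>x. \<exists>i\<le>k. s < TT p x (Suc i))"
proof -
  have [measurable]: "(\<lambda>x. TT p x (Suc i)) \<in> borel_measurable (PiM (Lk k) (\<lambda>_. borel))" if "i \<in> {..k}" for i
    using that by (intro TT_meas_Lk) simp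
  have "Measurable.pred (PiM (Lk k) (\<lambda>_. borel)) (\<lambda>x. \<exists>i\<in>{..k}. s < TT p x (Suc i))"
    by measurable
  then show ?thesis by (simp add: atMost_iff)
qed

lemma C_Gk: "{\<omega>\<in>space M. \<exists>i\<le>k. s < TT p (Vp E U \<omega>) (Suc i)} \<in> sets (Gk k)"
proof -
  have "{\<omega>\<in>space M. \<exists>i\<le>k. s < TT p (Vp E U \<omega>) (Suc i)} = {\<omega>\<in>space M. \<exists>i\<le>k. s < TT p (Rk k \<omega>) (Suc i)}"
    using TT_agree[OF Rk_agree] by auto
  also have "\<dots> \<in> sets (Gk k)" by (rule Gk_pred[OF pred_C])
  finally show ?thesis .
qed

abbreviation FF :: "real \<Rightarrow> 'a measure" where
  "FF s \<equiv> natural_filtration M (\<lambda>t \<omega>. PP p t (Vp E U \<omega>)) s"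

definition Gen :: "real \<Rightarrow> 'a set set" where
  "Gen s = {(\<lambda>t \<omega>. PP p t (Vp E U \<omega>)) r -` A \<inter> space M | r A. 0 \<le> r \<and> r \<le> s}"

lemma Gen_Pow: "Gen s \<subseteq> Pow (space M)" by (auto simp: Gen_def)

lemma sets_FF: "sets (FF s) = sigma_sets (space M) (Gen s)"
  unfolding natural_filtration_def Gen_def[symmetric] using Gen_Pow by (simp add: sets_measure_of)

lemma space_FF: "space (FF s) = space M"
  unfolding natural_filtration_def Gen_def[symmetric] using Gen_Pow by (simp add: space_measure_of)

lemma Fs_Gk:
  assumes "A \<in> sets (FF s)"
  shows "A \<inter> {\<omega>\<in>space M. \<exists>i\<le>k. s < TT p (Vp E U \<omega>) (Suc i)} \<in> sets (Gk k)"
proof -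
  define C where "C = {\<omega>\<in>space M. \<exists>i\<le>k. s < TT p (Vp E U \<omega>) (Suc i)}"
  have C: "C \<in> sets (Gk k)" unfolding C_def by (rule C_Gk)
  have "A \<in> sigma_sets (space M) (Gen s)" using assms by (simp add: sets_FF)
  then have "A \<inter> C \<in> sets (Gk k)"
  proof (induction rule: sigma_sets.induct)
    case (Basic a)
    then obtain r B where a: "a = (\<lambda>\<omega>. PP p r (Vp E U \<omega>)) -` B \<inter> space M" "0 \<le> r" "r \<le> s"
      by (auto simp: Gen_def)
    define Qg where "Qg = (\<lambda>x. (\<exists>i\<in>{..k}. s < TT p x (Suc i)) \<and>
       (\<exists>m\<in>{..k}. r < TT p x (Suc m) \<and> (\<forall>m'\<in>{..k}. m' < m \<longrightarrow> \<not> r < TT p x (Suc m')) \<and> JC p x m \<in> B))"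
    have eq1: "Qg x \<longleftrightarrow> (\<exists>i\<le>k. s < TT p x (Suc i)) \<and> PP p r x \<in> B" for x
    proof (cases "\<exists>i\<le>k. s < TT p x (Suc i)")
      case True
      show ?thesis unfolding Qg_def PP_local[OF True a(3)] by auto
    qed (auto simp: Qg_def)
    have eq2: "Qg (Vp E U \<omega>) \<longleftrightarrow> Qg (Rk k \<omega>)" for \<omega>
    proof -
      have t: "TT p (Vp E U \<omega>) (Suc i) = TT p (Rk k \<omega>) (Suc i)" if "i \<le> k" for i
        using that by (intro TT_agree[OF Rk_agree]) auto
      have j: "JC p (Vp E U \<omega>) m = JC p (Rk k \<omega>) m" if "m \<le> k" for m
        using that by (intro JC_agree[OF Rk_agree]) auto
      show ?thesis unfolding Qg_def using t j by (auto simp: atMost_iff)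
    qed
    have [measurable]: "(\<lambda>x. TT p x (Suc i)) \<in> borel_measurable (PiM (Lk k) (\<lambda>_. borel))" if "i \<in> {..k}" for i
      using that by (intro TT_meas_Lk) simp
    have [measurable]: "Measurable.pred (PiM (Lk k) (\<lambda>_. borel)) (\<lambda>x. JC p x m \<in> B)" if "m \<in> {..k}" for m
    proof -
      have "(\<lambda>x. (\<lambda>y. y \<in> B) (JC p x m)) \<in> measurable (PiM (Lk k) (\<lambda>_. borel)) (count_space UNIV)"
        by (rule measurable_compose[OF JC_meas_Pi measurable_count_space]) (use that in \<open>auto simp: Lk_def\<close>)
      then show ?thesis by (simp add: pred_def)
    qed
    have pQ: "Measurable.pred (PiM (Lk k) (\<lambda>_. borel)) Qg" unfolding Qg_def by measurable
    have "a \<inter> C = {\<omega>\<in>space M. Qg (Vp E U \<omega>)}"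
      unfolding a C_def using eq1 by auto
    also have "\<dots> = {\<omega>\<in>space M. Qg (Rk k \<omega>)}" by (simp only: eq2)
    finally have "a \<inter> C = {\<omega>\<in>space M. Qg (Rk k \<omega>)}" .
    then show ?case using Gk_pred[OF pQ] by simp
  next
    case Empty then show ?case by simp
  next
    case (Compl a)
    have "(space M - a) \<inter> C = C - (a \<inter> C)" using C_def by auto
    then show ?case using Compl C by auto
  next
    case (Union a)
    have "(\<Union>i. a i) \<inter> C = (\<Union>i. a i \<inter> C)" by auto
    moreover have "(\<Union>i. a i \<inter> C) \<in> sets (Gk k)" using Union by (intro sets.countable_UN) auto
    ultimately show ?case by simp
  qed
  then show ?thesis by (simp add: C_def)
qed

lemma Dd_indep:
  assumes "B \<in> sets (Gk k)"
  shows "expectation (\<lambda>\<omega>. Dd p (Vp E U \<omega>) k * indicator B \<omega>) = 0"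
proof -
  obtain S where S: "S \<in> sets (PiM (Lk k) (\<lambda>_. borel))" "B = Rk k -` S \<inter> space M"
    using assms unfolding Gk_def by (subst (asm) sets_vimage_algebra2) (use measurable_space[OF Rk_meas] in auto)
  define X1 where "X1 = (\<lambda>\<omega>. restrict (\<lambda>i. V i \<omega>) {Inr k})"
  define Y1 where "Y1 = (\<lambda>x::nat + nat \<Rightarrow> real. p - (if x (Inr k) < p then 1 else 0))"
  have iv: "indep_var (PiM {Inr k} (\<lambda>_. borel)) X1 (PiM (Lk k) (\<lambda>_. borel)) (Rk k)"
    unfolding X1_def Rk_def[abs_def] by (rule indep_var_restrict[OF ind]) (auto simp: Lk_def)
  have Y1m: "Y1 \<in> borel_measurable (PiM {Inr k} (\<lambda>_. borel))"
  proof -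
    have [measurable]: "(\<lambda>x. x (Inr k)) \<in> borel_measurable (PiM {Inr k} (\<lambda>_. borel :: real measure))"
      by (rule measurable_component_singleton) simp
    show ?thesis unfolding Y1_def by measurable
  qed
  have iv2: "indep_var borel (Y1 \<circ> X1) borel (indicator S \<circ> Rk k)"
    by (rule indep_var_compose[OF iv Y1m]) (use S(1) in simp)
  have m1: "(Y1 \<circ> X1) \<in> borel_measurable M" using indep_var_rv1[OF iv2] by simp
  have m2: "(indicator S \<circ> Rk k :: 'a \<Rightarrow> real) \<in> borel_measurable M" using indep_var_rv2[OF iv2] by simp
  have i1: "integrable M (Y1 \<circ> X1)"
    by (rule integrable_const_bound[where B=1]) (use m1 p0 p1 in \<open>auto simp: Y1_def\<close>)
  have i2: "integrable M (indicator S \<circ> Rk k :: 'a \<Rightarrow> real)"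
    by (rule integrable_const_bound[where B=1]) (use m2 in \<open>auto simp: indicator_def\<close>)
  have "expectation (\<lambda>\<omega>. Dd p (Vp E U \<omega>) k * indicator B \<omega>) = expectation (\<lambda>\<omega>. (Y1 \<circ> X1) \<omega> * (indicator S \<circ> Rk k) \<omega>)"
    by (intro Bochner_Integration.integral_cong) (auto simp: Dd_def S(2) indicator_def Y1_def X1_def)
  also have "\<dots> = expectation (Y1 \<circ> X1) * expectation (indicator S \<circ> Rk k)"
    by (rule indep_var_lebesgue_integral[OF iv2 i1 i2])
  also have "expectation (Y1 \<circ> X1) = expectation (\<lambda>\<omega>. Dd p (Vp E U \<omega>) k)"
    by (intro Bochner_Integration.integral_cong) (auto simp: Dd_def Y1_def X1_def)
  finally show ?thesis by (simp add: Dd_integral)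
qed

definition Zf :: "real \<Rightarrow> 'a \<Rightarrow> real" where "Zf t \<omega> = ZZ p t (Vp E U \<omega>)"
definition Jset :: "nat \<Rightarrow> real \<Rightarrow> 'a set" where "Jset k t = {\<omega>\<in>space M. TT p (Vp E U \<omega>) (Suc k) \<le> t}"

lemma Jset_sets[measurable]: "Jset k t \<in> sets M" unfolding Jset_def by measurable

lemma PPw_meas: "(\<lambda>\<omega>. PP p t (Vp E U \<omega>)) \<in> M \<rightarrow>\<^sub>M count_space UNIV"
  by (rule measurable_compose[OF Vp_meas PP_meas])

lemma Zf_meas[measurable]: "Zf t \<in> borel_measurable M"
proof -
  have "(\<lambda>\<omega>. (\<lambda>y. p * real (snd y) - (1 - p) * real (fst y)) (PP p t (Vp E U \<omega>))) \<in> borel_measurable M"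
    by (rule measurable_compose[OF PPw_meas]) simp
  then show ?thesis by (simp add: Zf_def[abs_def] ZZ_def)
qed

lemma finite_support_J:
  assumes "\<forall>j. 0 \<le> E j \<omega>" "\<exists>k. t < TT p (Vp E U \<omega>) (Suc k)"
  shows "\<And>k. k \<notin> {..<NN p t (Vp E U \<omega>)} \<Longrightarrow> \<omega> \<notin> Jset k t"
proof -
  fix k assume "k \<notin> {..<NN p t (Vp E U \<omega>)}"
  then have "Suc (NN p t (Vp E U \<omega>)) \<le> Suc k" by simp
  then have "TT p (Vp E U \<omega>) (Suc (NN p t (Vp E U \<omega>))) \<le> TT p (Vp E U \<omega>) (Suc k)"
    using assms(1) p0 by (intro TT_mono) auto
  then show "\<omega> \<notin> Jset k t" using NN_props(1)[OF assms(2)] by (auto simp: Jset_def)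
qed

lemma int_Jsum: "integrable M (\<lambda>\<omega>. \<Sum>k. indicator (Jset k t) \<omega> :: real)"
  and AE_Jsum: "AE \<omega> in M. summable (\<lambda>k. indicator (Jset k t) \<omega> :: real)"
proof -
  show ae: "AE \<omega> in M. summable (\<lambda>k. indicator (Jset k t) \<omega> :: real)"
    using E_nonneg_AE nonexplosion_AE[of t]
  proof eventually_elim
    case (elim \<omega>)
    show ?case by (rule summable_finite[of "{..<NN p t (Vp E U \<omega>)}"]) (use finite_support_J[OF elim] in auto)
  qed
  show "integrable M (\<lambda>\<omega>. \<Sum>k. indicator (Jset k t) \<omega> :: real)"
  proof (rule integrable_suminf)
    show "AE x in M. summable (\<lambda>i. norm (indicator (Jset i t) x :: real))"
      using ae by simp
    show "summable (\<lambda>i. \<integral>x. norm (indicator (Jset i t) x :: real) \<partial>M)"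
      using explosion_summable[of t] by (simp add: Jset_def)
  qed (auto simp: emeasure_eq_measure)
qed

lemma Zf_integrable: "integrable M (Zf t)"
proof (rule Bochner_Integration.integrable_bound)
  show "integrable M (\<lambda>\<omega>. 2 + (\<Sum>k. indicator (Jset k t) \<omega> :: real))"
    using int_Jsum by simp
  show "AE \<omega> in M. norm (Zf t \<omega>) \<le> norm (2 + (\<Sum>k. indicator (Jset k t) \<omega> :: real))"
    using E_nonneg_AE nonexplosion_AE[of t] AE_Jsum[of t] AE_space
  proof eventually_elim
    case (elim \<omega>)
    define n where "n = NN p t (Vp E U \<omega>)"
    have "\<bar>Zf t \<omega>\<bar> \<le> real n + 2"
      using elim(2) abs_Zc[OF p0 p1] by (simp add: Zf_def ZZ_eq n_def)
    also have "real n = (\<Sum>k<n. indicator (Jset k t) \<omega> :: real)"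
      using NN_props(2)[OF elim(2)] elim(4) by (simp add: n_def Jset_def indicator_def not_less)
    also have "\<dots> \<le> (\<Sum>k. indicator (Jset k t) \<omega>)"
      by (rule sum_le_suminf[OF elim(3)]) auto
    finally have "\<bar>Zf t \<omega>\<bar> \<le> 2 + (\<Sum>k. indicator (Jset k t) \<omega> :: real)" by simp
    moreover have "0 \<le> (\<Sum>k. indicator (Jset k t) \<omega> :: real)"
      by (rule suminf_nonneg[OF elim(3)]) simp
    ultimately show ?case by simp
  qed
qed simp

lemma FF_sub: "sets (FF s) \<subseteq> sets M"
proof -
  have "Gen s \<subseteq> sets M"
    using measurable_sets[OF PPw_meas] by (auto simp: Gen_def)
  then show ?thesis unfolding sets_FF by (rule sets.sigma_sets_subset)
qed

lemma mart_step:
  assumes st: "0 \<le> s" "s \<le> t" and A: "A \<in> sets (FF s)"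
  shows "(\<integral>\<omega>. indicator A \<omega> * (Zf t \<omega> - Zf s \<omega>) \<partial>M) = 0"
proof -
  define I where "I = (\<lambda>k. {\<omega>\<in>space M. (\<exists>i\<le>k. s < TT p (Vp E U \<omega>) (Suc i)) \<and> \<not> (\<exists>i\<le>k. t < TT p (Vp E U \<omega>) (Suc i))})"
  define f where "f = (\<lambda>k \<omega>. Dd p (Vp E U \<omega>) k * indicator (A \<inter> I k) \<omega>)"
  have Asp: "A \<subseteq> space M" using FF_sub A sets.sets_into_space by blast
  have AIG: "A \<inter> I k \<in> sets (Gk k)" for k
  proof -
    have "A \<inter> I k = (A \<inter> {\<omega>\<in>space M. \<exists>i\<le>k. s < TT p (Vp E U \<omega>) (Suc i)}) - {\<omega>\<in>space M. \<exists>i\<le>k. t < TT p (Vp E U \<omega>) (Suc i)}"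
      using Asp by (auto simp: I_def)
    also have "\<dots> \<in> sets (Gk k)" using Fs_Gk[OF A, of k] C_Gk[of k t] by (rule sets.Diff)
    finally show ?thesis .
  qed
  have AIM[measurable]: "A \<inter> I k \<in> sets M" for k using AIG Gk_sets by blast
  have fint: "integrable M (f k)" for k
    unfolding f_def by (rule integrable_real_mult_indicator[OF AIM Dd_integrable])
  have f0: "integral\<^sup>L M (f k) = 0" for k unfolding f_def by (rule Dd_indep[OF AIG])
  have fbound: "norm (f k \<omega>) \<le> indicator (Jset k t) \<omega>" for k \<omega>
  proof -
    have "A \<inter> I k \<subseteq> Jset k t" using Asp by (auto simp: I_def Jset_def not_less)
    then have "indicator (A \<inter> I k) \<omega> \<le> (indicator (Jset k t) \<omega> :: real)" by (auto simp: indicator_def)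
    moreover have "\<bar>Dd p (Vp E U \<omega>) k\<bar> \<le> 1" by (rule abs_Dd[OF p0 p1])
    ultimately show ?thesis unfolding f_def by (auto simp: abs_mult indicator_def split: if_splits)
  qed
  have sumint: "summable (\<lambda>k. \<integral>\<omega>. norm (f k \<omega>) \<partial>M)"
  proof (rule summable_comparison_test[OF _ explosion_summable[of t]])
    show "\<exists>N. \<forall>n\<ge>N. norm (\<integral>\<omega>. norm (f n \<omega>) \<partial>M) \<le> prob {\<omega> \<in> space M. TT p (Vp E U \<omega>) (Suc n) \<le> t}"
    proof (intro exI allI impI)
      fix n :: nat
      have "(\<integral>\<omega>. norm (f n \<omega>) \<partial>M) \<le> (\<integral>\<omega>. indicator (Jset n t) \<omega> \<partial>M)"
        by (intro integral_mono fbound) (auto intro: fint simp: emeasure_eq_measure)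
      also have "\<dots> = prob {\<omega> \<in> space M. TT p (Vp E U \<omega>) (Suc n) \<le> t}"
        by (simp add: Jset_def Int_absorb2)
      finally show "norm (\<integral>\<omega>. norm (f n \<omega>) \<partial>M) \<le> prob {\<omega> \<in> space M. TT p (Vp E U \<omega>) (Suc n) \<le> t}"
        by simp
    qed
  qed
  have AEeq: "AE \<omega> in M. indicator A \<omega> * (Zf t \<omega> - Zf s \<omega>) = (\<Sum>k. f k \<omega>)"
    using nonexplosion_AE[of t] AE_space
  proof eventually_elim
    case (elim \<omega>)
    define x where "x = Vp E U \<omega>"
    have supp: "f k \<omega> = 0" if "k \<notin> {NN p s x..<NN p t x}" for k
    proof -
      have "\<omega> \<notin> I k" using that Ik_set(1)[OF elim(1)[folded x_def] st(2)] elim(2) by (auto simp: I_def x_def)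
      then show ?thesis by (simp add: f_def)
    qed
    have inside: "f k \<omega> = Dd p x k * indicator A \<omega>" if "k \<in> {NN p s x..<NN p t x}" for k
    proof -
      have "\<omega> \<in> I k" using that Ik_set(1)[OF elim(1)[folded x_def] st(2)] elim(2) by (auto simp: I_def x_def)
      then show ?thesis by (simp add: f_def x_def indicator_def)
    qed
    have "(\<Sum>k. f k \<omega>) = (\<Sum>k\<in>{NN p s x..<NN p t x}. f k \<omega>)"
      by (rule suminf_finite) (use supp in auto)
    also have "\<dots> = (\<Sum>k\<in>{NN p s x..<NN p t x}. Dd p x k) * indicator A \<omega>"
      by (simp add: inside sum_distrib_right)
    also have "\<dots> = indicator A \<omega> * (Zf t \<omega> - Zf s \<omega>)"
      using Ik_set(2)[OF elim(1)[folded x_def] st(2)] by (simp add: Zf_def x_def)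
    finally show ?case by simp
  qed
  have "(\<integral>\<omega>. indicator A \<omega> * (Zf t \<omega> - Zf s \<omega>) \<partial>M) = (\<integral>\<omega>. (\<Sum>k. f k \<omega>) \<partial>M)"
  proof (rule integral_cong_AE)
    have [measurable]: "A \<in> sets M" using FF_sub A by blast
    have [measurable]: "f k \<in> borel_measurable M" for k using fint[of k] by auto
    show "(\<lambda>\<omega>. indicator A \<omega> * (Zf t \<omega> - Zf s \<omega>)) \<in> borel_measurable M" by measurable
    show "(\<lambda>\<omega>. \<Sum>k. f k \<omega>) \<in> borel_measurable M" by measurable
  qed (use AEeq in auto)
  also have "\<dots> = (\<Sum>k. integral\<^sup>L M (f k))"
  proof (rule integral_suminf)
    show "AE x in M. summable (\<lambda>i. norm (f i x))"
      using nonexplosion_AE[of t] AE_space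
    proof eventually_elim
      case (elim \<omega>)
      define x where "x = Vp E U \<omega>"
      show ?case
      proof (rule summable_finite[of "{NN p s x..<NN p t x}"])
        fix k assume "k \<notin> {NN p s x..<NN p t x}"
        then have "\<omega> \<notin> I k" using Ik_set(1)[OF elim(1)[folded x_def] st(2)] elim(2) by (auto simp: I_def x_def)
        then show "norm (f k \<omega>) = 0" by (simp add: f_def)
      qed simp
    qed
  qed (use fint sumint in auto)
  also have "\<dots> = 0" by (simp add: f0)
  finally show ?thesis .
qed

end


context pctx begin

lemma PPw_FF_meas:
  assumes "0 \<le> t"
  shows "(\<lambda>\<omega>. PP p t (Vp E U \<omega>)) \<in> FF t \<rightarrow>\<^sub>M count_space UNIV"
  unfolding measurable_count_space_eq2_countable
proof safe
  fix y
  have "(\<lambda>\<omega>. PP p t (Vp E U \<omega>)) -` {y} \<inter> space M \<in> Gen t"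
    unfolding Gen_def using assms by blast
  then show "(\<lambda>\<omega>. PP p t (Vp E U \<omega>)) -` {y} \<inter> space (FF t) \<in> sets (FF t)"
    unfolding space_FF sets_FF by (rule sigma_sets.Basic)
qed simp

lemma Zf_FF_meas:
  assumes "0 \<le> t"
  shows "Zf t \<in> borel_measurable (FF t)"
proof -
  have "(\<lambda>\<omega>. (\<lambda>y. p * real (snd y) - (1 - p) * real (fst y)) (PP p t (Vp E U \<omega>))) \<in> borel_measurable (FF t)"
    by (rule measurable_compose[OF PPw_FF_meas[OF assms]]) simp
  then show ?thesis by (simp add: Zf_def[abs_def] ZZ_def)
qed

lemma FF_subalg: "subalgebra M (FF t)"
  unfolding subalgebra_def using FF_sub space_FF by simp

lemma FF_mono: "s \<le> t \<Longrightarrow> sets (FF s) \<subseteq> sets (FF t)"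
  unfolding sets_FF by (rule sigma_sets_mono') (unfold Gen_def, blast intro: order_trans)

lemma cond_exp_Zf:
  assumes st: "0 \<le> s" "s \<le> t"
  shows "AE \<omega> in M. real_cond_exp M (FF s) (Zf t) \<omega> = Zf s \<omega>"
proof -
  interpret fms: finite_measure_subalgebra M "FF s"
    by unfold_locales (rule FF_subalg)
  show ?thesis
  proof (rule fms.real_cond_exp_charact)
    fix A assume A: "A \<in> sets (FF s)"
    have [measurable]: "A \<in> sets M" using FF_sub A by blast
    have i1: "integrable M (\<lambda>\<omega>. Zf t \<omega> * indicator A \<omega>)"
      by (rule integrable_real_mult_indicator) (auto simp: Zf_integrable)
    have i2: "integrable M (\<lambda>\<omega>. Zf s \<omega> * indicator A \<omega>)"
      by (rule integrable_real_mult_indicator) (auto simp: Zf_integrable)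
    have "(\<integral>\<omega>. Zf t \<omega> * indicator A \<omega> \<partial>M) - (\<integral>\<omega>. Zf s \<omega> * indicator A \<omega> \<partial>M)
        = (\<integral>\<omega>. indicator A \<omega> * (Zf t \<omega> - Zf s \<omega>) \<partial>M)"
      by (subst Bochner_Integration.integral_diff[OF i1 i2, symmetric]) (simp add: algebra_simps)
    also have "\<dots> = 0" by (rule mart_step[OF st A])
    finally show "(\<integral>\<omega>\<in>A. Zf t \<omega> \<partial>M) = (\<integral>\<omega>\<in>A. Zf s \<omega> \<partial>M)"
      by (simp add: set_lebesgue_integral_def mult.commute)
  qed (auto simp: Zf_integrable Zf_FF_meas[OF st(1)])
qed

theorem mart: "ct_martingale M (natural_filtration M (\<lambda>t \<omega>. PP p t (Vp E U \<omega>))) Zf"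
  unfolding ct_martingale_def
proof (intro conjI allI impI)
  fix t :: real assume t: "0 \<le> t"
  show "subalgebra M (FF t)" by (rule FF_subalg)
  show "integrable M (Zf t)" by (rule Zf_integrable)
  show "Zf t \<in> borel_measurable (FF t)" by (rule Zf_FF_meas[OF t])
next
  fix s t :: real assume "0 \<le> s \<and> s \<le> t"
  then show "sets (FF s) \<subseteq> sets (FF t)" by (intro FF_mono) simp
next
  fix s t :: real assume "0 \<le> s \<and> s \<le> t"
  then show "AE \<omega> in M. real_cond_exp M (FF s) (Zf t) \<omega> = Zf s \<omega>" by (intro cond_exp_Zf) auto
qed

definition Wf :: "'a \<Rightarrow> real" where
  "Wf \<omega> = exp (lim (\<lambda>k. ln (aa p (Vp E U \<omega>) k) - TT p (Vp E U \<omega>) k))"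

lemma Wf_meas: "Wf \<in> borel_measurable M"
proof -
  have "(\<lambda>\<omega>. lim (\<lambda>k. ln (aa p (Vp E U \<omega>) k) - TT p (Vp E U \<omega>) k)) \<in> borel_measurable M"
    by (rule borel_measurable_lim_metric) simp
  then show ?thesis unfolding Wf_def[abs_def] by simp
qed

lemma as_limits:
  "AE \<omega> in M. ((\<lambda>t. exp (-t) * real (fst (PP p t (Vp E U \<omega>)))) \<longlongrightarrow> Wf \<omega>) at_top \<and>
     ((\<lambda>t. exp (-t) * Zf t \<omega>) \<longlongrightarrow> 0) at_top \<and>
     ((\<lambda>t. exp (-t) * real (snd (PP p t (Vp E U \<omega>)))) \<longlongrightarrow> (1 - p) * Wf \<omega> / p) at_top"
  using E_nonneg_AE SX_AE SE_AE
proof eventually_elim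
  case (elim \<omega>)
  define x where "x = Vp E U \<omega>"
  have hE: "\<And>j. 0 \<le> x (Inl j)" using elim(1) by (simp add: x_def)
  have hX: "eventually (\<lambda>k. \<bar>\<Sum>j<k. ((if x (Inr j) < p then 1 else 0) - p)\<bar> \<le> real k powr (3/4)) sequentially"
    using elim(2) by (simp add: x_def)
  have hE2: "eventually (\<lambda>k. \<bar>\<Sum>j<k. (x (Inl j) - 1)\<bar> \<le> real k powr (3/4)) sequentially"
    using elim(3) by (simp add: x_def)
  note D = det_main[OF p0 p1 hE hX hE2]
  show ?case using D(2,3,4) by (simp add: Wf_def Zf_def x_def)
qed

end

theorem lemma5p2:
  fixes M :: "'a measure" and p q :: real
    and E U :: "nat \<Rightarrow> 'a \<Rightarrow> real"
  assumes "prob_space M"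
    and "0 < p" "p \<le> 1" "0 \<le> q" "q \<le> 1"
    and "\<And>k. distributed M lborel (E k) (exponential_density 1)"
    and "\<And>k. distributed M lborel (U k) (\<lambda>x. indicator {0..1::real} x / measure lborel {0..1::real})"
    and "prob_space.indep_vars M (\<lambda>_. borel)
           (\<lambda>i. case i of Inl k \<Rightarrow> E k | Inr k \<Rightarrow> U k) (UNIV :: (nat + nat) set)"
  shows "ct_martingale M (natural_filtration M (pdbp p q E U))
           (\<lambda>t \<omega>. p * real (nB p q E U t \<omega>) - (1 - p) * real (nA p q E U t \<omega>)) \<and>
         (AE \<omega> in M. ((\<lambda>t. exp (- t) * (p * real (nB p q E U t \<omega>) - (1 - p) * real (nA p q E U t \<omega>)))
                       \<longlongrightarrow> 0) at_top) \<and>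
         (\<exists>W. W \<in> borel_measurable M \<and> (AE \<omega> in M. 0 < W \<omega>) \<and>
             (AE \<omega> in M. ((\<lambda>t. exp (- t) * real (nA p q E U t \<omega>)) \<longlongrightarrow> W \<omega>) at_top) \<and>
             (AE \<omega> in M. ((\<lambda>t. exp (- t) * real (nB p q E U t \<omega>)) \<longlongrightarrow> (1 - p) * W \<omega> / p) at_top))"
proof -
  interpret pctx M p E U
    by (intro pctx.intro pctx_axioms.intro) (rule assms)+
  have pd: "pdbp p q E U = (\<lambda>t \<omega>. PP p t (Vp E U \<omega>))"
    using assms(2) by (simp add: fun_eq_iff pdbp_eq)
  have Zeq: "(\<lambda>t \<omega>. p * real (nB p q E U t \<omega>) - (1 - p) * real (nA p q E U t \<omega>)) = Zf"
    using assms(2) by (simp add: fun_eq_iff nA_eq nB_eq Zf_def ZZ_def)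
  have Zeq': "p * real (nB p q E U t \<omega>) - (1 - p) * real (nA p q E U t \<omega>) = Zf t \<omega>" for t \<omega>
    using Zeq by (simp add: fun_eq_iff)
  show ?thesis
    unfolding pd Zeq Zeq'
  proof (intro conjI exI)
    show "ct_martingale M (natural_filtration M (\<lambda>t \<omega>. PP p t (Vp E U \<omega>))) Zf" by (rule mart)
    show "AE \<omega> in M. ((\<lambda>t. exp (- t) * Zf t \<omega>) \<longlongrightarrow> 0) at_top"
      using as_limits by eventually_elim simp
    show "Wf \<in> borel_measurable M" by (rule Wf_meas)
    show "AE \<omega> in M. 0 < Wf \<omega>" by (simp add: Wf_def)
    show "AE \<omega> in M. ((\<lambda>t. exp (- t) * real (nA p q E U t \<omega>)) \<longlongrightarrow> Wf \<omega>) at_top"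
      using as_limits by eventually_elim (use assms(2) in \<open>simp add: nA_eq\<close>)
    show "AE \<omega> in M. ((\<lambda>t. exp (- t) * real (nB p q E U t \<omega>)) \<longlongrightarrow> (1 - p) * Wf \<omega> / p) at_top"
      using as_limits by eventually_elim (use assms(2) in \<open>simp add: nB_eq\<close>)
  qed
qed


end
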